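(* Let $n,m,k$ be integers with $m\geq 1$, $k\geq 3$ and $n\geq 6m+7$. Then $$ gr_{k}(K_{3} : S(n,m))=\begin{cases} 5\cdot\frac{n}{2} + m(k-3)+1 & \text{ if $n$ is even,}\\ 5\cdot\frac{n-1}{2} + m(k-3)+ 2 & \text{ if $n$ is odd.} \end{cases} $$
   Context: For integers $n\geq m\geq 0$, the double star $S(n,m)$ is the graph obtained from the disjoint union of the stars $K_{1,n}$ and $K_{1,m}$ by adding an edge between their centers. A $k$-coloring of a graph is an assignment of one of $k$ colors to each edge. A subgraph is rainbow if all its edges have distinct colors and monochromatic if all its edges have the same color. For graphs $G,H$ and a positive integer $k$, the Gallai–Ramsey number $gr_k(G:H)$ is the minimum integer $N$ such that every $k$-coloring of the edges of the complete graph $K_N$ contains either a rainbow copy of $G$ or a monochromatic copy of $H$. *)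

theory Defs
  imports Main
begin

text \<open>The complete graph K_N has vertex set {0..<N}.
A k-colouring uses colours from {0..<k} (not necessarily all of them).\<close>

definition k_coloring :: "nat \<Rightarrow> nat \<Rightarrow> (nat \<Rightarrow> nat \<Rightarrow> nat) \<Rightarrow> bool" where
  "k_coloring k N c \<longleftrightarrow>
     (\<forall>x<N. \<forall>y<N. x \<noteq> y \<longrightarrow> c x y = c y x \<and> c x y < k)"

definition rainbow_K3 :: "nat \<Rightarrow> (nat \<Rightarrow> nat \<Rightarrow> nat) \<Rightarrow> bool" where
  "rainbow_K3 N c \<longleftrightarrow>
     (\<exists>x y z. x < N \<and> y < N \<and> z < N \<and> x \<noteq> y \<and> y \<noteq> z \<and> x \<noteq> z \<and>
        c x y \<noteq> c y z \<and> c y z \<noteq> c x z \<and> c x y \<noteq> c x z)"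

definition mono_double_star :: "nat \<Rightarrow> (nat \<Rightarrow> nat \<Rightarrow> nat) \<Rightarrow> nat \<Rightarrow> nat \<Rightarrow> bool" where
  "mono_double_star N c n m \<longleftrightarrow>
     (\<exists>u v A B. u < N \<and> v < N \<and> u \<noteq> v \<and>
        A \<subseteq> {0..<N} - {u, v} \<and> B \<subseteq> {0..<N} - {u, v} \<and> A \<inter> B = {} \<and>
        card A = n \<and> card B = m \<and>
        (\<forall>a\<in>A. c u a = c u v) \<and> (\<forall>b\<in>B. c v b = c u v))"

definition gr_K3_double_star :: "nat \<Rightarrow> nat \<Rightarrow> nat \<Rightarrow> nat" where
  "gr_K3_double_star k n m =
     (LEAST N. \<forall>c. k_coloring k N c \<longrightarrow> rainbow_K3 N c \<or> mono_double_star N c n m)"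

end

theory Submission
  imports Defs
begin

locale gal =
  fixes N :: nat and c :: "nat \<Rightarrow> nat \<Rightarrow> nat"
  assumes csym: "\<And>x y. x < N \<Longrightarrow> y < N \<Longrightarrow> c x y = c y x"
  and gal: "\<And>x y z. x < N \<Longrightarrow> y < N \<Longrightarrow> z < N \<Longrightarrow> x \<noteq> y \<Longrightarrow> y \<noteq> z \<Longrightarrow> x \<noteq> z \<Longrightarrow>
       c x y = c y z \<or> c y z = c x z \<or> c x y = c x z"
begin

definition E :: "nat \<Rightarrow> nat set \<Rightarrow> (nat \<times> nat) set" where
  "E i S = {(x,y). x \<in> S \<and> y \<in> S \<and> x \<noteq> y \<and> c x y = i}"

definition used :: "nat set \<Rightarrow> nat set" where
  "used S = {c x y | x y. x \<in> S \<and> y \<in> S \<and> x \<noteq> y}"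

lemma used_mono: "S' \<subseteq> S \<Longrightarrow> used S' \<subseteq> used S"
  unfolding used_def by blast

lemma used_finite: "finite S \<Longrightarrow> finite (used S)"
proof -
  assume "finite S"
  have "used S \<subseteq> (\<lambda>(x,y). c x y) ` (S \<times> S)" unfolding used_def by force
  thus ?thesis using \<open>finite S\<close> by (meson finite_SigmaI finite_imageI finite_subset)
qed

lemma E_sym: "S \<subseteq> {..<N} \<Longrightarrow> (x,y) \<in> E i S \<Longrightarrow> (y,x) \<in> E i S"
  unfolding E_def using csym by auto

lemma rt_sym: assumes "S \<subseteq> {..<N}" "(x,y) \<in> (E i S)\<^sup>*" shows "(y,x) \<in> (E i S)\<^sup>*"
  using assms(2)
proof induction
  case base then show ?case by simp
next
  case (step y z)
  then have "(z,y) \<in> E i S" using E_sym[OF assms(1)] by blast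
  then show ?case using step.IH by (meson converse_rtrancl_into_rtrancl)
qed

lemma rt_mono: "S' \<subseteq> S \<Longrightarrow> (E i S')\<^sup>* \<subseteq> (E i S)\<^sup>*"
  by (rule rtrancl_mono) (auto simp: E_def)

lemma rt_in: "(x,y) \<in> (E i S)\<^sup>* \<Longrightarrow> x \<in> S \<Longrightarrow> y \<in> S"
  by (induction rule: rtrancl_induct) (auto simp: E_def)

lemma U: assumes S: "S \<subseteq> {..<N}" and xx: "(x, x') \<in> (E i S)\<^sup>*" and y: "y \<in> S"
    and nc: "(x,y) \<notin> (E i S)\<^sup>*" and x: "x \<in> S"
  shows "c x y = c x' y"
  using xx
proof (induction rule: rtrancl_induct)
  case base thus ?case by simp
next
  case (step u w)
  have uw: "u \<in> S" "w \<in> S" "u \<noteq> w" "c u w = i" using step.hyps(2) by (auto simp: E_def)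
  have "u \<noteq> y" using nc step.hyps(1) by auto
  have "w \<noteq> y" using nc step.hyps by (meson rtrancl_into_rtrancl)
  have "c u y \<noteq> i"
  proof
    assume "c u y = i"
    then have "(u,y) \<in> E i S" using uw \<open>u \<noteq> y\<close> y by (auto simp: E_def)
    then show False using nc step.hyps(1) by (meson rtrancl_into_rtrancl)
  qed
  have "c w y \<noteq> i"
  proof
    assume "c w y = i"
    then have "(w,y) \<in> E i S" using uw \<open>w \<noteq> y\<close> y by (auto simp: E_def)
    then show False using nc step.hyps by (meson rtrancl_into_rtrancl)
  qed
  have "c u w = c w y \<or> c w y = c u y \<or> c u w = c u y"
    using gal[of u w y] uw y S \<open>u \<noteq> y\<close> \<open>w \<noteq> y\<close> by auto
  then have "c w y = c u y" using uw \<open>c u y \<noteq> i\<close> \<open>c w y \<noteq> i\<close> by auto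
  thus ?case using step.IH by simp
qed

lemma prefix: assumes S: "S \<subseteq> {..<N}" and "(w, v) \<in> (E i S)\<^sup>*" "w \<in> S" "w \<noteq> v"
  shows "\<exists>y \<in> S - {v}. (w,y) \<in> (E i (S - {v}))\<^sup>* \<and> c y v = i"
  using assms(2-4)
proof (induction rule: converse_rtrancl_induct)
  case base thus ?case by simp
next
  case (step w w1)
  have e: "w1 \<in> S" "c w w1 = i" "w \<noteq> w1" using step.hyps(1) by (auto simp: E_def)
  show ?case
  proof (cases "w1 = v")
    case True
    then show ?thesis using e step.prems by auto
  next
    case False
    then obtain y where y: "y \<in> S - {v}" "(w1,y) \<in> (E i (S - {v}))\<^sup>*" "c y v = i"
      using step.IH e by blast
    have "(w, w1) \<in> E i (S - {v})" using e False step.prems by (auto simp: E_def)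
    then have "(w,y) \<in> (E i (S - {v}))\<^sup>*" using y(2) by (meson converse_rtrancl_into_rtrancl)
    then show ?thesis using y by blast
  qed
qed

lemma three_elems: assumes "finite A" "3 \<le> card A"
  shows "\<exists>g h. g \<in> A \<and> h \<in> A \<and> g \<noteq> i \<and> h \<noteq> i \<and> g \<noteq> h"
proof -
  have "A - {i} \<noteq> {}"
  proof
    assume "A - {i} = {}" then have "A \<subseteq> {i}" by auto
    then have "card A \<le> card {i}" using card_mono[of "{i}" A] by simp
    then have "card A \<le> 1" by simp
    thus False using assms by simp
  qed
  then obtain g where g: "g \<in> A" "g \<noteq> i" by auto
  have "A - {i,g} \<noteq> {}"
  proof
    assume "A - {i,g} = {}" then have "A \<subseteq> {i,g}" by auto
    then have "card A \<le> card {i,g}" by (simp add: card_mono)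
    also have "\<dots> \<le> 2" by (simp add: card_insert_if)
    finally show False using assms by simp
  qed
  then obtain h where "h \<in> A" "h \<noteq> i" "h \<noteq> g" by auto
  thus ?thesis using g by blast
qed

lemma appear:
  assumes S: "S \<subseteq> {..<N}" and allc: "\<And>x y. x \<in> S \<Longrightarrow> y \<in> S \<Longrightarrow> (x,y) \<in> (E g S)\<^sup>*"
    and g: "g \<in> used S" and x: "x \<in> S"
  shows "\<exists>y\<in>S. y \<noteq> x \<and> c x y = g"
proof -
  obtain a b where ab: "a \<in> S" "b \<in> S" "a \<noteq> b" "c a b = g" using g unfolding used_def by blast
  show ?thesis
  proof (cases "x = a")
    case True then show ?thesis using ab by auto
  next
    case False
    have "(x,a) \<in> (E g S)\<^sup>*" using allc x ab by blast
    then obtain y where "(x,y) \<in> E g S" using False by (metis converse_rtranclE)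
    then show ?thesis by (auto simp: E_def)
  qed
qed

lemma CON: "finite S \<Longrightarrow> S \<subseteq> {..<N} \<Longrightarrow> 3 \<le> card (used S) \<Longrightarrow>
   \<exists>i\<in>used S. \<exists>x\<in>S. \<exists>y\<in>S. (x,y) \<notin> (E i S)\<^sup>*"
proof (induction S rule: finite_psubset_induct)
  case (psubset S)
  note S = psubset.prems(1)
  show ?case
  proof (rule ccontr)
    assume "\<not> ?thesis"
    then have allc: "\<And>i x y. i \<in> used S \<Longrightarrow> x \<in> S \<Longrightarrow> y \<in> S \<Longrightarrow> (x,y) \<in> (E i S)\<^sup>*" by blast
    have app: "\<And>g x. g \<in> used S \<Longrightarrow> x \<in> S \<Longrightarrow> \<exists>y\<in>S. y \<noteq> x \<and> c x y = g"
      using appear[OF S] allc by blast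
    have "used S \<noteq> {}" using psubset.prems(2) by auto
    then obtain v where v: "v \<in> S" unfolding used_def by blast
    define S' where "S' = S - {v}"
    have psub: "S' \<subset> S" using v S'_def by auto
    have S'N: "S' \<subseteq> {..<N}" using S S'_def by auto
    have finU: "finite (used S)" using used_finite psubset.hyps by blast
    show False
    proof (cases "3 \<le> card (used S')")
      case True
      from psubset.IH[OF psub S'N True] obtain i a b where
        iab: "i \<in> used S'" "a \<in> S'" "b \<in> S'" "(a,b) \<notin> (E i S')\<^sup>*" by blast
      have iS: "i \<in> used S" using iab(1) used_mono[of S' S] psub by blast
      have ii: "\<And>w. w \<in> S' \<Longrightarrow> \<exists>y\<in>S'. c v y = i \<and> (w,y) \<in> (E i S')\<^sup>*"
      proof -
        fix w assume w: "w \<in> S'"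
        have "(w,v) \<in> (E i S)\<^sup>*" using allc iS w v S'_def by blast
        then obtain y where "y \<in> S - {v}" "(w,y) \<in> (E i (S - {v}))\<^sup>*" "c y v = i"
          using prefix[OF S] w S'_def by blast
        then show "\<exists>y\<in>S'. c v y = i \<and> (w,y) \<in> (E i S')\<^sup>*"
          using csym S v S'_def by (metis DiffE lessThan_iff subsetD)
      qed
      obtain g h where gh: "g \<in> used S" "h \<in> used S" "g \<noteq> i" "h \<noteq> i" "g \<noteq> h"
        using three_elems[OF finU psubset.prems(2)] by blast
      obtain z where z: "z \<in> S" "z \<noteq> v" "c v z = g" using app[OF gh(1) v] by blast
      obtain z' where z': "z' \<in> S" "z' \<noteq> v" "c v z' = h" using app[OF gh(2) v] by blast
      have zS: "z \<in> S'" "z' \<in> S'" using z z' S'_def by auto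
      have K: "\<And>y z g. z \<in> S' \<Longrightarrow> y \<in> S' \<Longrightarrow> c v y = i \<Longrightarrow> (y,z) \<notin> (E i S')\<^sup>*
                 \<Longrightarrow> c v z = g \<Longrightarrow> g \<noteq> i \<Longrightarrow> c y z = g"
      proof -
        fix y z g assume a: "z \<in> S'" "y \<in> S'" "c v y = i" "(y,z) \<notin> (E i S')\<^sup>*" "c v z = g" "g \<noteq> i"
        have d: "y \<noteq> z" "v \<noteq> y" "v \<noteq> z" using a S'_def by auto
        have "c y z \<noteq> i"
        proof
          assume "c y z = i"
          then have "(y,z) \<in> E i S'" using a d by (auto simp: E_def)
          then show False using a(4) by blast
        qed
        moreover have "c v y = c y z \<or> c y z = c v z \<or> c v y = c v z"
          using gal[of v y z] d a S'N v S by auto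
        ultimately show "c y z = g" using a by auto
      qed
      show False
      proof (cases "(z,z') \<in> (E i S')\<^sup>*")
        case True
        have "(a,z) \<notin> (E i S')\<^sup>* \<or> (b,z) \<notin> (E i S')\<^sup>*"
        proof (rule ccontr)
          assume "\<not> ?thesis"
          then have "(a,z) \<in> (E i S')\<^sup>*" "(z,b) \<in> (E i S')\<^sup>*" using rt_sym[OF S'N] by auto
          then show False using iab(4) by (meson rtrancl_trans)
        qed
        then obtain w0 where w0: "w0 \<in> S'" "(w0,z) \<notin> (E i S')\<^sup>*" using iab by blast
        obtain y0 where y0: "y0 \<in> S'" "c v y0 = i" "(w0,y0) \<in> (E i S')\<^sup>*" using ii[OF w0(1)] by blast
        have n1: "(y0,z) \<notin> (E i S')\<^sup>*" using w0 y0 by (meson rtrancl_trans)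
        have n2: "(y0,z') \<notin> (E i S')\<^sup>*"
          using n1 True rt_sym[OF S'N] by (meson rtrancl_trans)
        have "c y0 z = g" using K[OF zS(1) y0(1) y0(2) n1 z(3) gh(3)] .
        moreover have "c y0 z' = h" using K[OF zS(2) y0(1) y0(2) n2 z'(3) gh(4)] .
        moreover have "c z y0 = c z' y0"
          using U[OF S'N True y0(1) _ zS(1)] n1 rt_sym[OF S'N] by blast
        ultimately show False using gh(5) csym S'N zS y0(1) by (metis lessThan_iff subsetD)
      next
        case False
        obtain y2 where y2: "y2 \<in> S'" "c v y2 = i" "(z,y2) \<in> (E i S')\<^sup>*" using ii[OF zS(1)] by blast
        have n2: "(y2,z') \<notin> (E i S')\<^sup>*" using False y2 by (meson rtrancl_trans)
        have h2: "c y2 z' = h" using K[OF zS(2) y2(1) y2(2) n2 z'(3) gh(4)] .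
        have "c z z' = c y2 z'" using U[OF S'N y2(3) zS(2) False zS(1)] .
        obtain y1 where y1: "y1 \<in> S'" "c v y1 = i" "(z',y1) \<in> (E i S')\<^sup>*" using ii[OF zS(2)] by blast
        have False': "(z',z) \<notin> (E i S')\<^sup>*" using False rt_sym[OF S'N] by blast
        have n1: "(y1,z) \<notin> (E i S')\<^sup>*" using False' y1 by (meson rtrancl_trans)
        have g1: "c y1 z = g" using K[OF zS(1) y1(1) y1(2) n1 z(3) gh(3)] .
        have "c z' z = c y1 z" using U[OF S'N y1(3) zS(1) False' zS(2)] .
        then show False using g1 h2 \<open>c z z' = c y2 z'\<close> gh(5) csym S'N zS by (metis lessThan_iff subsetD)
      qed
    next
      case False
      have "\<not> used S \<subseteq> used S'"
      proof
        assume "used S \<subseteq> used S'"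
        then have "card (used S) \<le> card (used S')"
          using used_finite psubset.hyps psub by (meson card_mono finite_subset psubset_imp_subset)
        then show False using False psubset.prems(2) by simp
      qed
      then obtain h where h: "h \<in> used S" "h \<notin> used S'" by blast
      have hv: "\<And>x. x \<in> S' \<Longrightarrow> c x v = h"
      proof -
        fix x assume x: "x \<in> S'"
        obtain y where y: "y \<in> S" "y \<noteq> x" "c x y = h" using app[OF h(1)] x S'_def by blast
        show "c x v = h"
        proof (cases "y = v")
          case True then show ?thesis using y by simp
        next
          case False
          then have "h \<in> used S'" using y x S'_def unfolding used_def by blast
          then show ?thesis using h by blast
        qed
      qed
      obtain g where g: "g \<in> used S" "g \<noteq> h"
        using three_elems[OF finU psubset.prems(2), of h] by blast
      obtain y where y: "y \<in> S" "y \<noteq> v" "c v y = g" using app[OF g(1) v] by blast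
      have "c y v = h" using hv y S'_def by blast
      then show False using csym y v S g by (metis lessThan_iff subsetD)
    qed
  qed
qed

definition PF :: "nat set \<Rightarrow> (nat \<Rightarrow> nat set) \<Rightarrow> bool" where
  "PF S part \<longleftrightarrow> (\<forall>x\<in>S. x \<in> part x \<and> part x \<subseteq> S \<and> (\<forall>y\<in>part x. part y = part x))"

definition GP :: "nat set \<Rightarrow> (nat \<Rightarrow> nat set) \<Rightarrow> nat \<Rightarrow> nat \<Rightarrow> bool" where
  "GP S part r b \<longleftrightarrow> PF S part \<and> r \<noteq> b \<and>
     (\<forall>x\<in>S. \<forall>y\<in>S. y \<notin> part x \<longrightarrow> c x y = r \<or> c x y = b) \<and>
     (\<forall>x\<in>S. \<forall>z\<in>S. \<forall>x'\<in>part x. z \<notin> part x \<longrightarrow> c z x' = c z x) \<and>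
     (\<exists>x\<in>S. \<exists>y\<in>S. y \<notin> part x)"

lemma PF_sym: "PF S part \<Longrightarrow> x \<in> S \<Longrightarrow> y \<in> S \<Longrightarrow> y \<notin> part x \<Longrightarrow> x \<notin> part y"
  unfolding PF_def by metis

lemma PF_disj: "PF S part \<Longrightarrow> x \<in> S \<Longrightarrow> y \<in> S \<Longrightarrow> y \<notin> part x \<Longrightarrow> part x \<inter> part y = {}"
  unfolding PF_def by (metis disjoint_iff subsetD)

lemma two_cover: assumes "finite (A::nat set)" "card A \<le> 2" shows "\<exists>r b. r \<noteq> b \<and> A \<subseteq> {r,b}"
proof (cases "A = {}")
  case True then show ?thesis by (intro exI[of _ 0] exI[of _ 1]) auto
next
  case False
  then obtain a where a: "a \<in> A" by auto
  show ?thesis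
  proof (cases "A - {a} = {}")
    case True then show ?thesis by (intro exI[of _ a] exI[of _ "Suc a"]) auto
  next
    case False
    then obtain b where b: "b \<in> A" "b \<noteq> a" by auto
    have "A \<subseteq> {a,b}"
    proof
      fix x assume x: "x \<in> A"
      show "x \<in> {a,b}"
      proof (rule ccontr)
        assume "x \<notin> {a,b}"
        then have "{a,b,x} \<subseteq> A" "card {a,b,x} = 3" using a b x by auto
        then have "3 \<le> card A" using assms(1) by (metis card_mono)
        then show False using assms(2) by simp
      qed
    qed
    then show ?thesis using b by blast
  qed
qed

lemma two_elems: assumes "2 \<le> card S" shows "\<exists>x\<in>S. \<exists>y\<in>S. x \<noteq> y"
proof (rule ccontr)
  assume "\<not> ?thesis"
  then have "\<forall>x\<in>S. \<forall>y\<in>S. x = y" by blast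
  moreover have "finite S" using assms by (metis card.infinite not_numeral_le_zero)
  ultimately have "card S \<le> Suc 0" using card_le_Suc0_iff_eq by blast
  then show False using assms by simp
qed

lemma gallai_partition:
  "finite S \<Longrightarrow> S \<subseteq> {..<N} \<Longrightarrow> 2 \<le> card S \<Longrightarrow> \<exists>part r b. GP S part r b"
proof (induction "card (used S)" arbitrary: S rule: less_induct)
  case less
  note S = less.prems(2)
  have finU: "finite (used S)" using used_finite less.prems(1) by blast
  show ?case
  proof (cases "card (used S) \<le> 2")
    case True
    obtain r b where rb: "r \<noteq> b" "used S \<subseteq> {r,b}" using two_cover[OF finU True] by blast
    define part where "part = (\<lambda>x::nat. {x})"
    obtain x y where xy: "x \<in> S" "y \<in> S" "x \<noteq> y"
      using two_elems[OF less.prems(3)] by blast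
    have "GP S part r b"
      unfolding GP_def PF_def part_def
    proof (intro conjI)
      show "\<forall>x\<in>S. \<forall>y\<in>S. y \<notin> {x} \<longrightarrow> c x y = r \<or> c x y = b"
        using rb unfolding used_def by blast
      show "\<exists>x\<in>S. \<exists>y\<in>S. y \<notin> {x}" using xy by blast
    qed (use rb in auto)
    then show ?thesis by blast
  next
    case False
    then obtain i a b where iab: "i \<in> used S" "a \<in> S" "b \<in> S" "(a,b) \<notin> (E i S)\<^sup>*"
      using CON[OF less.prems(1) S] by force
    define comp where "comp x = {y \<in> S. (x,y) \<in> (E i S)\<^sup>*}" for x
    define rep where "rep x = Min (comp x)" for x
    have comp_fin: "finite (comp x)" for x using less.prems(1) comp_def by auto
    have rep1: "rep x \<in> comp x" if "x \<in> S" for x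
    proof -
      have "x \<in> comp x" using that comp_def by auto
      then show ?thesis unfolding rep_def using comp_fin by (metis Min_in empty_iff)
    qed
    have rep2: "rep x \<in> S" "(x, rep x) \<in> (E i S)\<^sup>*" if "x \<in> S" for x
      using rep1[OF that] comp_def by auto
    have compeq: "comp x = comp y" if "(x,y) \<in> (E i S)\<^sup>*" for x y
    proof -
      have "(y,x) \<in> (E i S)\<^sup>*" using rt_sym[OF S that] .
      then show ?thesis unfolding comp_def using that by (meson rtrancl_trans)
    qed
    have repeq: "rep x = rep y" if "(x,y) \<in> (E i S)\<^sup>*" for x y
      unfolding rep_def using compeq[OF that] by simp
    have repconn: "(x,y) \<in> (E i S)\<^sup>*" if "x \<in> S" "y \<in> S" "rep x = rep y" for x y
    proof -
      have 1: "(x, rep x) \<in> (E i S)\<^sup>*" using rep2(2) that(1) by blast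
      have "(y, rep y) \<in> (E i S)\<^sup>*" using rep2(2) that(2) by blast
      then have 2: "(rep x, y) \<in> (E i S)\<^sup>*" using that(3) rt_sym[OF S] by simp
      show ?thesis using 1 2 by (rule rtrancl_trans)
    qed
    have reprep: "rep (rep x) = rep x" if "x \<in> S" for x
      using repeq[OF rep2(2)[OF that]] by simp
    define T where "T = rep ` S"
    have TS: "T \<subseteq> S" using rep2 T_def by auto
    have TN: "T \<subseteq> {..<N}" using TS S by auto
    have finT: "finite T" using T_def less.prems(1) by auto
    have "rep a \<noteq> rep b" using repconn iab by blast
    then have "card {rep a, rep b} = 2" by simp
    moreover have "{rep a, rep b} \<subseteq> T" using iab T_def by auto
    ultimately have cT: "2 \<le> card T" using finT by (metis card_mono)
    have uT: "used T \<subseteq> used S - {i}"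
    proof
      fix j assume "j \<in> used T"
      then obtain t t' where tt: "t \<in> T" "t' \<in> T" "t \<noteq> t'" "c t t' = j" unfolding used_def by blast
      have "j \<in> used S" using tt TS unfolding used_def by blast
      moreover have "j \<noteq> i"
      proof
        assume "j = i"
        then have "(t,t') \<in> E i S" using tt TS by (auto simp: E_def)
        then have "rep t = rep t'" using repeq by blast
        moreover have "rep t = t" "rep t' = t'" using tt reprep T_def by auto
        ultimately show False using tt by simp
      qed
      ultimately show "j \<in> used S - {i}" by blast
    qed
    have "card (used T) < card (used S)"
    proof -
      have "used T \<subset> used S" using uT iab(1) by blast
      then show ?thesis using finU by (meson psubset_card_mono)
    qed
    then obtain partT r b' where GT: "GP T partT r b'" using less.hyps finT TN cT by blast
    have PFT: "PF T partT" using GT[unfolded GP_def] by (elim conjE) assumption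
    define part where "part x = {y \<in> S. rep y \<in> partT (rep x)}" for x
    have repT: "rep x \<in> T" if "x \<in> S" for x using that T_def by auto
    have key: "c x y = c (rep x) (rep y)" if "x \<in> S" "y \<in> S" "rep y \<notin> partT (rep x)" for x y
    proof -
      have ne: "rep y \<noteq> rep x" using that PFT repT unfolding PF_def by metis
      have nc: "(x,y) \<notin> (E i S)\<^sup>*" using ne repeq by metis
      have "c x y = c (rep x) y" using U[OF S rep2(2)[OF that(1)] that(2) nc that(1)] .
      also have "\<dots> = c y (rep x)" using csym S that rep2 by (meson lessThan_iff subsetD)
      also have "\<dots> = c (rep y) (rep x)"
      proof -
        have "(y, rep x) \<notin> (E i S)\<^sup>*" using ne repeq reprep that by metis
        then show ?thesis using U[OF S rep2(2)[OF that(2)] rep2(1)[OF that(1)] _ that(2)] by blast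
      qed
      also have "\<dots> = c (rep x) (rep y)" using csym S that rep2 by (meson lessThan_iff subsetD)
      finally show ?thesis .
    qed
    have modT: "\<And>x z x'. x \<in> T \<Longrightarrow> z \<in> T \<Longrightarrow> x' \<in> partT x \<Longrightarrow> z \<notin> partT x \<Longrightarrow> c z x' = c z x"
      using GT unfolding GP_def by blast
    have crT: "\<And>x y. x \<in> T \<Longrightarrow> y \<in> T \<Longrightarrow> y \<notin> partT x \<Longrightarrow> c x y = r \<or> c x y = b'"
      using GT unfolding GP_def by blast
    have "GP S part r b'"
      unfolding GP_def
    proof (intro conjI)
      show "PF S part" unfolding PF_def part_def
      proof (intro ballI conjI)
        fix x assume x: "x \<in> S"
        show "x \<in> {y \<in> S. rep y \<in> partT (rep x)}" using x PFT repT unfolding PF_def by blast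
        show "{y \<in> S. rep y \<in> partT (rep x)} \<subseteq> S" by blast
        fix y assume "y \<in> {y \<in> S. rep y \<in> partT (rep x)}"
        then have "partT (rep y) = partT (rep x)" using PFT repT x unfolding PF_def by blast
        then show "{ya \<in> S. rep ya \<in> partT (rep y)} = {y \<in> S. rep y \<in> partT (rep x)}" by simp
      qed
      show "r \<noteq> b'" using GT[unfolded GP_def] by (elim conjE) assumption
      show "\<forall>x\<in>S. \<forall>y\<in>S. y \<notin> part x \<longrightarrow> c x y = r \<or> c x y = b'"
      proof (intro ballI impI)
        fix x y assume xy: "x \<in> S" "y \<in> S" "y \<notin> part x"
        then have "rep y \<notin> partT (rep x)" unfolding part_def by blast
        then show "c x y = r \<or> c x y = b'" using key[OF xy(1,2)] crT[OF repT[OF xy(1)] repT[OF xy(2)]] by simp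
      qed
      show "\<forall>x\<in>S. \<forall>z\<in>S. \<forall>x'\<in>part x. z \<notin> part x \<longrightarrow> c z x' = c z x"
      proof (intro ballI impI)
        fix x z x' assume a: "x \<in> S" "z \<in> S" "x' \<in> part x" "z \<notin> part x"
        have x': "x' \<in> S" "rep x' \<in> partT (rep x)" using a(3) part_def by auto
        have z1: "rep z \<notin> partT (rep x)" using a part_def by blast
        have eqp: "partT (rep x') = partT (rep x)" using PFT x' repT a(1) unfolding PF_def by blast
        have z2: "rep x' \<notin> partT (rep z)" using PF_sym[OF PFT repT[OF x'(1)] repT[OF a(2)]] z1 eqp by simp
        have z3: "rep x \<notin> partT (rep z)" using PF_sym[OF PFT repT[OF a(1)] repT[OF a(2)]] z1 by simp
        have "c z x' = c (rep z) (rep x')" using key[OF a(2) x'(1) z2] .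
        also have "\<dots> = c (rep z) (rep x)"
          using modT[OF repT[OF a(1)] repT[OF a(2)] x'(2) z1] .
        also have "\<dots> = c z x" using key[OF a(2) a(1) z3] by simp
        finally show "c z x' = c z x" .
      qed
      show "\<exists>x\<in>S. \<exists>y\<in>S. y \<notin> part x"
      proof -
        have "\<exists>x\<in>T. \<exists>y\<in>T. y \<notin> partT x" using GT[unfolded GP_def] by (elim conjE) assumption
        then obtain t t' where tt: "t \<in> T" "t' \<in> T" "t' \<notin> partT t" by blast
        obtain x where x: "x \<in> S" "t = rep x" using tt(1) unfolding T_def by blast
        obtain y where y: "y \<in> S" "t' = rep y" using tt(2) unfolding T_def by blast
        have "y \<notin> part x" using tt(3) x y unfolding part_def by simp
        then show ?thesis using x y by blast
      qed
    qed
    then show ?thesis by blast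
  qed
qed

end

lemma dc: "finite A \<Longrightarrow> finite B \<Longrightarrow>
  (\<Sum>y\<in>A. card {z\<in>B. R y z}) = (\<Sum>z\<in>B. card {y\<in>A. R y z})"
  using sum.swap_restrict[of A B "\<lambda>x y. (1::nat)" R] by simp

locale mainloc = gal N c for N c +
  fixes n m :: nat
  assumes nods: "\<not> mono_double_star N c n m"
  and m1: "1 \<le> m" and nbig: "6*m+7 \<le> n"
begin

lemma ds:
  assumes uv: "u < N" "v < N" "u \<noteq> v" "c u v = i"
    and Su: "Su \<subseteq> {x. x < N \<and> x \<noteq> u \<and> x \<noteq> v \<and> c u x = i}"
    and Sv: "Sv \<subseteq> {x. x < N \<and> x \<noteq> u \<and> x \<noteq> v \<and> c v x = i}"
    and cards: "n \<le> card Su" "m \<le> card Sv" "n + m \<le> card (Su \<union> Sv)"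
  shows False
proof -
  have fSu: "finite Su" using Su by (rule finite_subset) auto
  have fSv: "finite Sv" using Sv by (rule finite_subset) auto
  define B0 where "B0 = Sv - Su"
  have cU: "card (Su \<union> Sv) = card Su + card B0"
  proof -
    have "card (Su \<union> B0) = card Su + card B0"
      by (rule card_Un_disjoint) (use fSu fSv B0_def in auto)
    moreover have "Su \<union> Sv = Su \<union> B0" using B0_def by auto
    ultimately show ?thesis by simp
  qed
  have cV: "card Sv = card B0 + card (Sv \<inter> Su)"
  proof -
    have "Sv = B0 \<union> (Sv \<inter> Su)" using B0_def by auto
    then show ?thesis using fSv B0_def by (metis Diff_disjoint card_Un_disjoint finite_Diff finite_Int inf_commute Int_Diff_disjoint)
  qed
  obtain A B where AB: "A \<subseteq> Su" "B \<subseteq> Sv" "A \<inter> B = {}" "card A = n" "card B = m"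
  proof (cases "m \<le> card B0")
    case True
    obtain B where "B \<subseteq> B0" "card B = m" "finite B" using True by (rule obtain_subset_with_card_n)
    moreover obtain A where "A \<subseteq> Su" "card A = n" "finite A" using cards(1) by (rule obtain_subset_with_card_n)
    ultimately show ?thesis using that B0_def by blast
  next
    case False
    have "m - card B0 \<le> card (Sv \<inter> Su)" using cV cards(2) by linarith
    then obtain B1 where B1: "B1 \<subseteq> Sv \<inter> Su" "card B1 = m - card B0" "finite B1"
      by (rule obtain_subset_with_card_n)
    have fB1: "finite B1" using B1 fSv by (meson finite_Int finite_subset)
    have "n \<le> card (Su - B1)"
    proof -
      have "card (Su - B1) = card Su - card B1" using B1 fB1 by (simp add: card_Diff_subset)
      then show ?thesis using cU cards(3) B1 False by linarith
    qed
    then obtain A where A: "A \<subseteq> Su - B1" "card A = n" "finite A" by (rule obtain_subset_with_card_n)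
    define B where "B = B0 \<union> B1"
    have f5: "card B = m"
    proof -
      have "B0 \<inter> B1 = {}" using B1 B0_def by auto
      moreover have "finite B0" using fSv B0_def by auto
      ultimately show ?thesis using B_def fB1 B1 False by (simp add: card_Un_disjoint)
    qed
    have f2: "B \<subseteq> Sv" using B_def B0_def B1 by auto
    have f3: "A \<inter> B = {}" using A B_def B0_def by auto
    have f1: "A \<subseteq> Su" using A(1) by blast
    show ?thesis by (rule that[OF f1 f2 f3 A(2) f5])
  qed
  have "u < N \<and> v < N \<and> u \<noteq> v \<and> A \<subseteq> {0..<N} - {u, v} \<and> B \<subseteq> {0..<N} - {u, v} \<and>
        A \<inter> B = {} \<and> card A = n \<and> card B = m \<and> (\<forall>a\<in>A. c u a = c u v) \<and> (\<forall>b\<in>B. c v b = c u v)"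
  proof (intro conjI)
    show "A \<subseteq> {0..<N} - {u, v}" using AB(1) Su by fastforce
    show "B \<subseteq> {0..<N} - {u, v}" using AB(2) Sv by fastforce
    show "\<forall>a\<in>A. c u a = c u v" using AB(1) Su uv(4) by fastforce
    show "\<forall>b\<in>B. c v b = c u v" using AB(2) Sv uv(4) by fastforce
  qed (use uv AB in auto)
  then have "mono_double_star N c n m"
    unfolding mono_double_star_def by blast
  then show False using nods by blast
qed

definition nb :: "nat \<Rightarrow> nat set \<Rightarrow> nat \<Rightarrow> nat set" where
  "nb i Q x = {y \<in> Q. y \<noteq> x \<and> c x y = i}"

abbreviation d :: "nat \<Rightarrow> nat set \<Rightarrow> nat \<Rightarrow> nat" where
  "d i Q x \<equiv> card (nb i Q x)"

lemma nb_fin: "Q \<subseteq> {..<N} \<Longrightarrow> finite (nb i Q x)"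
  unfolding nb_def by (rule finite_subset[of _ "{..<N}"]) auto

lemma Gp: assumes Q: "Q \<subseteq> {..<N}" and x: "x \<in> Q" and rx: "n+m+1 \<le> d i Q x"
  and y: "y \<in> nb i Q x" and ry: "m+1 \<le> d i Q y" shows False
proof -
  have y': "y \<in> Q" "y \<noteq> x" "c x y = i" using y nb_def by auto
  have xN: "x < N" "y < N" using Q x y' by auto
  let ?Su = "nb i Q x - {y}" and ?Sv = "nb i Q y - {x}"
  have c1: "card ?Su = d i Q x - 1" using y nb_fin[OF Q] by simp
  have c2: "m \<le> card ?Sv"
  proof -
    have "card ?Sv \<ge> d i Q y - 1" using diff_card_le_card_Diff[of "{x}" "nb i Q y"] by simp
    then show ?thesis using ry by linarith
  qed
  have c3: "card ?Su \<le> card (?Su \<union> ?Sv)" using nb_fin[OF Q] by (simp add: card_mono)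
  show False
    apply (rule ds[OF xN(1) xN(2) y'(2)[symmetric] y'(3), of ?Su ?Sv])
    using Q c1 c2 c3 rx csym xN y' unfolding nb_def by (auto simp: subset_iff)
qed

lemma MDL_half:
  assumes Q: "Q \<subseteq> {..<N}" and ij: "i \<noteq> j"
    and sum: "\<forall>x\<in>Q. D \<le> d i Q x + d j Q x" and D1: "n + 2*m + 1 \<le> D"
  shows "card {x\<in>Q. d i Q x \<le> m} * (D - m) \<le> card {x\<in>Q. d j Q x \<le> m} * m"
proof -
  define Pi where "Pi = {x\<in>Q. d i Q x \<le> m}"
  define Pj where "Pj = {x\<in>Q. d j Q x \<le> m}"
  have fQ: "finite Q" using Q by (rule finite_subset) auto
  have fP: "finite Pi" "finite Pj" using fQ Pi_def Pj_def by auto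
  have sub: "nb j Q y \<subseteq> Pj" if "y \<in> Pi" for y
  proof
    fix z assume z: "z \<in> nb j Q y"
    have "d j Q y \<ge> n+m+1" using sum that Pi_def D1 by fastforce
    then have "\<not> m+1 \<le> d j Q z" using Gp[OF Q _ _ z] that Pi_def by blast
    then show "z \<in> Pj" using z Pj_def nb_def by auto
  qed
  have "(\<Sum>y\<in>Pi. card {z\<in>Pj. z \<noteq> y \<and> c y z = j}) = (\<Sum>z\<in>Pj. card {y\<in>Pi. z \<noteq> y \<and> c y z = j})"
    using dc[OF fP] .
  moreover have "(\<Sum>y\<in>Pi. card {z\<in>Pj. z \<noteq> y \<and> c y z = j}) \<ge> card Pi * (D - m)"
  proof -
    have "card {z\<in>Pj. z \<noteq> y \<and> c y z = j} \<ge> D - m" if "y \<in> Pi" for y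
    proof -
      have "{z\<in>Pj. z \<noteq> y \<and> c y z = j} = nb j Q y" using sub[OF that] Pj_def nb_def by auto
      moreover have "d j Q y \<ge> D - m" using sum that Pi_def by fastforce
      ultimately show ?thesis by simp
    qed
    then have "(\<Sum>y\<in>Pi. D - m) \<le> (\<Sum>y\<in>Pi. card {z\<in>Pj. z \<noteq> y \<and> c y z = j})"
      by (rule sum_mono)
    then show ?thesis by simp
  qed
  moreover have "(\<Sum>z\<in>Pj. card {y\<in>Pi. z \<noteq> y \<and> c y z = j}) \<le> card Pj * m"
  proof -
    have "card {y\<in>Pi. z \<noteq> y \<and> c y z = j} \<le> m" if "z \<in> Pj" for z
    proof -
      have "{y\<in>Pi. z \<noteq> y \<and> c y z = j} \<subseteq> nb j Q z"
        using that Pi_def Pj_def nb_def csym Q by (auto simp: subset_iff)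
      then have "card {y\<in>Pi. z \<noteq> y \<and> c y z = j} \<le> d j Q z" using nb_fin[OF Q] by (simp add: card_mono)
      then show ?thesis using that Pj_def by auto
    qed
    then have "(\<Sum>z\<in>Pj. card {y\<in>Pi. z \<noteq> y \<and> c y z = j}) \<le> (\<Sum>z\<in>Pj. m)" by (rule sum_mono)
    then show ?thesis by simp
  qed
  ultimately have "card Pi * (D - m) \<le> card Pj * m" by linarith
  then show ?thesis using Pi_def Pj_def by simp
qed

lemma MDL:
  assumes Q: "Q \<subseteq> {..<N}" "Q \<noteq> {}" and rb: "r \<noteq> b"
    and rich: "\<forall>x\<in>Q. n+m+1 \<le> d r Q x \<or> n+m+1 \<le> d b Q x"
    and sum: "\<forall>x\<in>Q. D \<le> d r Q x + d b Q x" and D1: "n + 2*m + 1 \<le> D"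
  shows False
proof -
  define a where "a = card {x\<in>Q. d r Q x \<le> m}"
  define b' where "b' = card {x\<in>Q. d b Q x \<le> m}"
  have h1: "a * (D - m) \<le> b' * m" using MDL_half[OF Q(1) rb sum D1] a_def b'_def by simp
  have sum': "\<forall>x\<in>Q. D \<le> d b Q x + d r Q x" using sum by auto
  have h2: "b' * (D - m) \<le> a * m" using MDL_half[OF Q(1) rb[symmetric] sum' D1] a_def b'_def by simp
  have fQ: "finite Q" using Q(1) by (meson finite_lessThan finite_subset)
  have pos: "a + b' > 0"
  proof -
    obtain x0 where x0: "x0 \<in> Q" using Q by auto
    have "\<exists>i. (i = r \<or> i = b) \<and> n+m+1 \<le> d i Q x0" using rich x0 by blast
    then obtain i where i: "i = r \<or> i = b" "n+m+1 \<le> d i Q x0" by blast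
    then have "nb i Q x0 \<noteq> {}" by auto
    then obtain y where y: "y \<in> nb i Q x0" by blast
    have "\<not> m+1 \<le> d i Q y" using Gp[OF Q(1) x0 i(2) y] by blast
    then have "y \<in> {x\<in>Q. d i Q x \<le> m}" using y nb_def by auto
    then have "{x\<in>Q. d i Q x \<le> m} \<noteq> {}" by blast
    then have "card {x\<in>Q. d i Q x \<le> m} > 0" using fQ by (simp add: card_gt_0_iff)
    then show ?thesis using i(1) a_def b'_def by auto
  qed
  have "(a + b') * (D - m) \<le> (a + b') * m" using h1 h2 by (simp add: algebra_simps)
  then have "D - m \<le> m" using pos by force
  then show False using D1 m1 by linarith
qed

end

context mainloc
begin

definition PS :: "nat set \<Rightarrow> (nat \<Rightarrow> nat set) \<Rightarrow> nat \<Rightarrow> nat \<Rightarrow> bool" where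
  "PS Q part i j \<longleftrightarrow> Q \<subseteq> {..<N} \<and> PF Q part \<and> i \<noteq> j \<and>
     (\<forall>x\<in>Q. \<forall>y\<in>Q. y \<notin> part x \<longrightarrow> c x y = i \<or> c x y = j) \<and>
     (\<forall>x\<in>Q. \<forall>z\<in>Q. \<forall>x'\<in>part x. z \<notin> part x \<longrightarrow> c z x' = c z x)"

lemma PS_swap: "PS Q part i j \<Longrightarrow> PS Q part j i"
  unfolding PS_def by blast

definition cn :: "nat set \<Rightarrow> (nat \<Rightarrow> nat set) \<Rightarrow> nat \<Rightarrow> nat \<Rightarrow> nat set" where
  "cn Q part i x = {y \<in> Q - part x. c x y = i}"

lemma PS_fin: "PS Q part i j \<Longrightarrow> finite Q"
  unfolding PS_def by (meson finite_lessThan finite_subset)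

lemma cn_fin: "PS Q part i j \<Longrightarrow> finite (cn Q part k x)"
  using PS_fin unfolding cn_def by auto

lemma part_fin: assumes P: "PS Q part i j" and x: "x \<in> Q" shows "finite (part x)"
proof -
  have "part x \<subseteq> Q" using P x unfolding PS_def PF_def by blast
  then show ?thesis using PS_fin[OF P] finite_subset by blast
qed

lemma L_sum: assumes P: "PS Q part i j" and x: "x \<in> Q"
  shows "card (cn Q part i x) + card (cn Q part j x) + card (part x) = card Q"
proof -
  have fQ: "finite Q" using PS_fin[OF P] .
  have pq: "part x \<subseteq> Q" using P x unfolding PS_def PF_def by blast
  have Qeq: "Q = (cn Q part i x \<union> cn Q part j x) \<union> part x"
    using P x pq unfolding PS_def cn_def by blast
  have d1: "cn Q part i x \<inter> cn Q part j x = {}" using P unfolding PS_def cn_def by auto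
  have d2: "(cn Q part i x \<union> cn Q part j x) \<inter> part x = {}" unfolding cn_def by auto
  have "card Q = card (cn Q part i x \<union> cn Q part j x) + card (part x)"
    using Qeq d2 fQ by (metis card_Un_disjoint finite_Un)
  also have "card (cn Q part i x \<union> cn Q part j x) = card (cn Q part i x) + card (cn Q part j x)"
    using d1 cn_fin[OF P] by (simp add: card_Un_disjoint)
  finally show ?thesis by simp
qed

lemma L_rev: assumes P: "PS Q part i j" and x: "x \<in> Q" and y: "y \<in> cn Q part k x"
  shows "x \<in> cn Q part k y"
proof -
  have y': "y \<in> Q" "y \<notin> part x" "c x y = k" using y cn_def by auto
  have "x \<notin> part y" using PF_sym[of Q part x y] P x y' unfolding PS_def by blast
  moreover have "c y x = k" using csym y' x P unfolding PS_def by (metis lessThan_iff subsetD)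
  ultimately show ?thesis using x unfolding cn_def by blast
qed

lemma L_mod: assumes P: "PS Q part i j" and x: "x \<in> Q" and y: "y \<in> cn Q part k x"
  shows "part y \<subseteq> cn Q part k x"
proof
  fix y' assume y'': "y' \<in> part y"
  have y': "y \<in> Q" "y \<notin> part x" "c x y = k" using y cn_def by auto
  have PF: "PF Q part" using P unfolding PS_def by blast
  have "y' \<in> Q" using PF y' y'' unfolding PF_def by blast
  moreover have "y' \<notin> part x" using PF_disj[OF PF x y'(1) y'(2)] y'' by blast
  moreover have "c x y' = c x y"
  proof -
    have "x \<notin> part y" using PF_sym[OF PF x y'(1) y'(2)] .
    then show ?thesis using P x y' y'' unfolding PS_def by blast
  qed
  ultimately show "y' \<in> cn Q part k x" using y' unfolding cn_def by simp
qed

lemma L_D: assumes P: "PS Q part i j" and x: "x \<in> Q"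
  and h1: "n+1 \<le> card (cn Q part i x)" and h2: "n+m+2 \<le> card (cn Q part i x) + card (part x)"
  and y: "y \<in> cn Q part i x" and h3: "m+1 \<le> card (cn Q part i y)"
  shows False
proof -
  have QN: "Q \<subseteq> {..<N}" using P unfolding PS_def by blast
  have PF: "PF Q part" using P unfolding PS_def by blast
  have y': "y \<in> Q" "y \<notin> part x" "c x y = i" using y cn_def by auto
  have xy: "x \<noteq> y" using PF x y'(2) unfolding PF_def by blast
  have xN: "x < N" "y < N" using QN x y' by auto
  let ?Su = "cn Q part i x - {y}" and ?Sv = "cn Q part i y - {x}"
  have xpart: "x \<in> part x" using PF x unfolding PF_def by blast
  have c1: "card ?Su = card (cn Q part i x) - 1" using y cn_fin[OF P] by simp
  have c2: "m \<le> card ?Sv"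
  proof -
    have "card ?Sv \<ge> card (cn Q part i y) - 1" using diff_card_le_card_Diff[of "{x}" "cn Q part i y"] by simp
    then show ?thesis using h3 by linarith
  qed
  have c3: "n + m \<le> card (?Su \<union> ?Sv)"
  proof -
    have sub: "?Su \<union> (part x - {x}) \<subseteq> ?Su \<union> ?Sv"
      using L_mod[OF P y'(1) L_rev[OF P x y]] by blast
    have f1: "finite ?Su" using cn_fin[OF P] by blast
    have f2: "finite (part x - {x})" using part_fin[OF P x] by blast
    have dj: "?Su \<inter> (part x - {x}) = {}" unfolding cn_def by blast
    have "card (?Su \<union> (part x - {x})) = card ?Su + card (part x - {x})"
      using card_Un_disjoint[OF f1 f2 dj] .
    also have "card (part x - {x}) = card (part x) - 1" using xpart part_fin[OF P x] by simp
    finally have e: "card (?Su \<union> (part x - {x})) = card (cn Q part i x) - 1 + (card (part x) - 1)"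
      using c1 by simp
    have fin: "finite (?Su \<union> ?Sv)" using cn_fin[OF P] by blast
    have le: "card (?Su \<union> (part x - {x})) \<le> card (?Su \<union> ?Sv)" using card_mono[OF fin sub] .
    have "part x \<noteq> {}" using xpart by blast
    then have "card (part x) \<ge> 1" using part_fin[OF P x] by (simp add: Suc_le_eq card_gt_0_iff)
    then show ?thesis using e le h1 h2 by linarith
  qed
  have Su: "?Su \<subseteq> {z. z < N \<and> z \<noteq> x \<and> z \<noteq> y \<and> c x z = i}"
    using QN xpart unfolding cn_def by auto
  have Sv: "?Sv \<subseteq> {z. z < N \<and> z \<noteq> x \<and> z \<noteq> y \<and> c y z = i}"
  proof -
    have "y \<in> part y" using PF y' unfolding PF_def by blast
    then show ?thesis using QN unfolding cn_def by auto
  qed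
  have c0: "n \<le> card ?Su" using c1 h1 by linarith
  show False by (rule ds[OF xN(1) xN(2) xy y'(3) Su Sv c0 c2 c3])
qed

lemma L_1: assumes P: "PS Q part i j" and x: "x \<in> Q"
  and h1: "m+1 \<le> card (part x)" and h2: "n+1 \<le> card (cn Q part i x)"
  shows False
proof -
  obtain y where y: "y \<in> cn Q part i x" using h2 by fastforce
  have "part x \<subseteq> cn Q part i y" using L_mod[OF P _ L_rev[OF P x y]] y cn_def by auto
  then have "card (part x) \<le> card (cn Q part i y)" using cn_fin[OF P] by (simp add: card_mono)
  then show False using L_D[OF P x h2 _ y] h1 h2 by linarith
qed

lemma L_2: assumes P: "PS Q part i j" and x: "x \<in> Q"
  and h1: "card (cn Q part i x) \<le> m" and small: "card (part x) \<le> n + m"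
  and M: "2*n+2*m+1 \<le> card Q"
  shows "card (part x) \<le> m"
proof (rule ccontr)
  assume "\<not> ?thesis"
  then have "m+1 \<le> card (part x)" by simp
  moreover have "n+1 \<le> card (cn Q part j x)" using L_sum[OF P x] h1 small M by linarith
  ultimately show False using L_1[OF PS_swap[OF P] x] by blast
qed

end

context mainloc
begin

lemma L_G: assumes P: "PS Q part k k'" and z: "z \<in> Q"
  and g1: "n+1 \<le> card (cn Q part k z)" and g2: "n+m+2 \<le> card (cn Q part k z) + card (part z)"
  and y: "y \<in> cn Q part k z"
  shows "card (cn Q part k y) \<le> m"
proof (rule ccontr)
  assume "\<not> ?thesis"
  then have "m+1 \<le> card (cn Q part k y)" by simp
  then show False using L_D[OF P z g1 g2 y] by blast
qed

lemma L_P: assumes P: "PS Q part k k'" and small: "\<forall>x\<in>Q. card (part x) \<le> n+m"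
  and M: "2*n+2*m+1 \<le> card Q" and y: "y \<in> Q" and dy: "card (cn Q part k y) \<le> m"
  shows "card (part y) \<le> m \<and> card Q - 2*m \<le> card (cn Q part k' y) \<and> n+1 \<le> card (cn Q part k' y)
         \<and> n+m+2 \<le> card (cn Q part k' y) + card (part y)"
proof -
  have w: "card (part y) \<le> m" using L_2[OF P y dy] small y M by blast
  have s: "card (cn Q part k y) + card (cn Q part k' y) + card (part y) = card Q" using L_sum[OF P y] .
  show ?thesis using w s dy M nbig m1 by linarith
qed

lemma L_3: assumes P: "PS Q part i j" and small: "\<forall>x\<in>Q. card (part x) \<le> n+m"
  and M1: "2*n+2*m+3 \<le> card Q" and M2: "4*m+1 \<le> card Q"
  and x: "x \<in> Q" and wx: "card (part x) \<le> m"
  and ge: "card (cn Q part j x) \<le> card (cn Q part i x)"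
  shows False
proof -
  have P': "PS Q part j i" using PS_swap[OF P] .
  have PF: "PF Q part" using P unfolding PS_def by blast
  have w1: "1 \<le> card (part x)"
  proof -
    have "part x \<noteq> {}" using PF x unfolding PF_def by blast
    then show ?thesis using part_fin[OF P x] by (simp add: Suc_le_eq card_gt_0_iff)
  qed
  have sx: "card (cn Q part i x) + card (cn Q part j x) + card (part x) = card Q" using L_sum[OF P x] .
  have gx1: "n+1 \<le> card (cn Q part i x)" using sx wx ge M1 by linarith
  have gx2: "n+m+2 \<le> card (cn Q part i x) + card (part x)" using sx w1 ge M1 by linarith
  obtain v where v: "v \<in> cn Q part i x" using gx1 by fastforce
  have vQ: "v \<in> Q" using v cn_def by auto
  have dv: "card (cn Q part i v) \<le> m" using L_G[OF P x gx1 gx2 v] .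
  have Pv: "card (part v) \<le> m \<and> card Q - 2*m \<le> card (cn Q part j v) \<and> n+1 \<le> card (cn Q part j v)
         \<and> n+m+2 \<le> card (cn Q part j v) + card (part v)" using L_P[OF P small _ vQ dv] M1 by simp
  obtain z where z: "z \<in> cn Q part j v" using Pv by fastforce
  have zQ: "z \<in> Q" using z cn_def by auto
  have dz: "card (cn Q part j z) \<le> m" using L_G[OF P' vQ _ _ z] Pv by blast
  have Pz: "card (part z) \<le> m \<and> card Q - 2*m \<le> card (cn Q part i z) \<and> n+1 \<le> card (cn Q part i z)
         \<and> n+m+2 \<le> card (cn Q part i z) + card (part z)" using L_P[OF P' small _ zQ dz] M1 by simp
  have sub: "cn Q part i z \<subseteq> part v \<union> cn Q part i v"
  proof
    fix y assume y: "y \<in> cn Q part i z"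
    have yQ: "y \<in> Q" using y cn_def by auto
    have dy: "card (cn Q part i y) \<le> m" using L_G[OF P zQ _ _ y] Pz by blast
    show "y \<in> part v \<union> cn Q part i v"
    proof (cases "y \<in> part v")
      case True then show ?thesis by blast
    next
      case False
      have "c v y = i \<or> c v y = j" using P vQ yQ False unfolding PS_def by blast
      then show ?thesis
      proof
        assume "c v y = i" then show ?thesis using False yQ unfolding cn_def by blast
      next
        assume "c v y = j"
        then have yj: "y \<in> cn Q part j v" using False yQ unfolding cn_def by blast
        have dyj: "card (cn Q part j y) \<le> m" using L_G[OF P' vQ _ _ yj] Pv by blast
        have wy: "card (part y) \<le> m" using L_P[OF P small _ yQ dy] M1 by simp
        have "card (cn Q part i y) + card (cn Q part j y) + card (part y) = card Q" using L_sum[OF P yQ] .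
        then show ?thesis using dy dyj wy M2 by linarith
      qed
    qed
  qed
  have "card (cn Q part i z) \<le> card (part v \<union> cn Q part i v)"
    using sub part_fin[OF P vQ] cn_fin[OF P] by (simp add: card_mono)
  also have "\<dots> \<le> card (part v) + card (cn Q part i v)" by (rule card_Un_le)
  finally show False using Pv dv Pz M2 by linarith
qed

lemma L_pair: assumes P: "PS Q part k k'"
  and Dle: "\<forall>z\<in>Q. card (cn Q part k z) \<le> n \<and> card (cn Q part k' z) \<le> n"
  and M: "2*n < card Q" and x: "x \<in> Q" and y: "y \<in> Q" and yx: "y \<notin> part x" and cxy: "c x y = k"
  shows "card (part x) + card (part y) \<le> n"
proof -
  have PF: "PF Q part" using P unfolding PS_def by blast
  have QN: "Q \<subseteq> {..<N}" using P unfolding PS_def by blast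
  have ycn: "y \<in> cn Q part k x" using y yx cxy cn_def by auto
  have xcn: "x \<in> cn Q part k y" using L_rev[OF P x ycn] .
  have "\<exists>z\<in>Q. z \<notin> part x \<and> z \<notin> part y \<and> c z x \<noteq> k \<and> c z y \<noteq> k"
  proof (rule ccontr)
    assume "\<not> ?thesis"
    then have all: "\<forall>z\<in>Q. z \<in> part x \<or> z \<in> part y \<or> c z x = k \<or> c z y = k" by blast
    have "Q \<subseteq> cn Q part k x \<union> cn Q part k y"
    proof
      fix z assume z: "z \<in> Q"
      have px: "part x \<subseteq> cn Q part k y" using L_mod[OF P y xcn] .
      have py: "part y \<subseteq> cn Q part k x" using L_mod[OF P x ycn] .
      show "z \<in> cn Q part k x \<union> cn Q part k y"
      proof (cases "z \<in> part x \<or> z \<in> part y")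
        case True then show ?thesis using px py by blast
      next
        case False
        then have "c z x = k \<or> c z y = k" using all z by blast
        moreover have "c x z = c z x" "c y z = c z y" using csym QN x y z by (meson lessThan_iff subsetD)+
        ultimately show ?thesis using False z unfolding cn_def by auto
      qed
    qed
    then have "card Q \<le> card (cn Q part k x \<union> cn Q part k y)" using cn_fin[OF P] by (simp add: card_mono)
    also have "\<dots> \<le> card (cn Q part k x) + card (cn Q part k y)" by (rule card_Un_le)
    moreover have "card (cn Q part k x) \<le> n" "card (cn Q part k y) \<le> n" using Dle x y by auto
    ultimately show False using M by linarith
  qed
  then obtain z where z: "z \<in> Q" "z \<notin> part x" "z \<notin> part y" "c z x \<noteq> k" "c z y \<noteq> k" by blast
  have "x \<notin> part z" using PF_sym[OF PF x z(1) z(2)] .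
  then have "c z x = k \<or> c z x = k'" using P z x unfolding PS_def by blast
  then have "c z x = k'" using z by blast
  then have x': "x \<in> cn Q part k' z" using x \<open>x \<notin> part z\<close> cn_def by auto
  have "y \<notin> part z" using PF_sym[OF PF y z(1) z(3)] .
  then have "c z y = k \<or> c z y = k'" using P z y unfolding PS_def by blast
  then have "c z y = k'" using z by blast
  then have y': "y \<in> cn Q part k' z" using y \<open>y \<notin> part z\<close> cn_def by auto
  have P': "PS Q part k' k" using PS_swap[OF P] .
  have "part x \<union> part y \<subseteq> cn Q part k' z" using L_mod[OF P' z(1) x'] L_mod[OF P' z(1) y'] by blast
  then have "card (part x \<union> part y) \<le> card (cn Q part k' z)" using cn_fin[OF P] by (simp add: card_mono)
  moreover have "card (part x \<union> part y) = card (part x) + card (part y)"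
    using PF_disj[OF PF x y yx] part_fin[OF P x] part_fin[OF P y] by (simp add: card_Un_disjoint)
  ultimately show ?thesis using Dle z(1) by fastforce
qed

lemma L_pair2: assumes P: "PS Q part i j"
  and Dle: "\<forall>z\<in>Q. card (cn Q part i z) \<le> n \<and> card (cn Q part j z) \<le> n"
  and M: "2*n < card Q" and x: "x \<in> Q" and y: "y \<in> Q" and yx: "y \<notin> part x"
  shows "card (part x) + card (part y) \<le> n"
proof -
  have "c x y = i \<or> c x y = j" using P x y yx unfolding PS_def by blast
  then show ?thesis
  proof
    assume "c x y = i" then show ?thesis using L_pair[OF P Dle M x y yx] by blast
  next
    assume "c x y = j"
    moreover have "\<forall>z\<in>Q. card (cn Q part j z) \<le> n \<and> card (cn Q part i z) \<le> n" using Dle by blast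
    ultimately show ?thesis using L_pair[OF PS_swap[OF P] _ M x y yx] by blast
  qed
qed

lemma L_C: assumes P: "PS Q part k k'" and a: "a \<in> Q" and ca: "card (cn Q part k a) = 2*p+1"
  and wb: "\<forall>y\<in>cn Q part k a. p \<le> card (part y) \<and> card (part y) \<le> p+1" and p2: "2 \<le> p"
  shows "\<exists>y\<in>cn Q part k a. card (part y) = p+1"
proof (rule ccontr)
  assume "\<not> ?thesis"
  then have wp: "\<forall>y\<in>cn Q part k a. card (part y) = p" using wb by fastforce
  let ?X = "cn Q part k a"
  have PF: "PF Q part" using P unfolding PS_def by blast
  have fX: "finite ?X" using cn_fin[OF P] .
  have XQ: "?X \<subseteq> Q" unfolding cn_def by blast
  have "?X \<noteq> {}"
  proof
    assume h: "?X = {}" show False using ca unfolding h by simp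
  qed
  then obtain y1 where y1: "y1 \<in> ?X" by blast
  have s1: "part y1 \<subseteq> ?X" using L_mod[OF P a y1] .
  have c1: "card (?X - part y1) = p+1" using s1 fX wp y1 ca by (simp add: card_Diff_subset finite_subset)
  have "?X - part y1 \<noteq> {}"
  proof
    assume h: "?X - part y1 = {}" show False using c1 unfolding h by simp
  qed
  then obtain y2 where y2: "y2 \<in> ?X - part y1" by blast
  have s2: "part y2 \<subseteq> ?X - part y1"
    using L_mod[OF P a] y2 PF_disj[OF PF _ _, of y1 y2] XQ y1 by blast
  have c2: "card (?X - part y1 - part y2) = 1"
    using s2 fX wp y2 c1 by (simp add: card_Diff_subset finite_subset)
  have "?X - part y1 - part y2 \<noteq> {}"
  proof
    assume h: "?X - part y1 - part y2 = {}" show False using c2 unfolding h by simp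
  qed
  then obtain y3 where y3: "y3 \<in> ?X - part y1 - part y2" by blast
  have d13: "part y1 \<inter> part y3 = {}" using PF_disj[OF PF, of y1 y3] XQ y1 y3 by blast
  have d23: "part y2 \<inter> part y3 = {}" using PF_disj[OF PF, of y2 y3] XQ y2 y3 by blast
  have s3: "part y3 \<subseteq> ?X - part y1 - part y2" using L_mod[OF P a, of y3] y3 d13 d23 by blast
  have "card (part y3) \<le> 1" using card_mono[OF _ s3] c2 fX by simp
  then show False using wp y3 p2 by auto
qed

end

context mainloc
begin

lemma L_4: assumes P: "PS Q part i j" and two: "\<exists>x\<in>Q. \<exists>y\<in>Q. y \<notin> part x"
  and big: "\<forall>x\<in>Q. m+1 \<le> card (part x)"
  and base: "(n = 2*p \<and> 5*p+1 \<le> card Q) \<or> (n = 2*p+1 \<and> 5*p+2 \<le> card Q)"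
  shows False
proof -
  have p: "3*m+3 \<le> p" using base nbig by (elim disjE) linarith+
  have M: "2*n < card Q" using base p by (elim disjE) linarith+
  have P': "PS Q part j i" using PS_swap[OF P] .
  have ij: "i \<noteq> j" using P unfolding PS_def by blast
  have Dle: "\<forall>z\<in>Q. card (cn Q part i z) \<le> n \<and> card (cn Q part j z) \<le> n"
  proof
    fix z assume z: "z \<in> Q"
    have "\<not> n+1 \<le> card (cn Q part i z)" using L_1[OF P z] big z by blast
    moreover have "\<not> n+1 \<le> card (cn Q part j z)" using L_1[OF P' z] big z by blast
    ultimately show "card (cn Q part i z) \<le> n \<and> card (cn Q part j z) \<le> n" by simp
  qed
  obtain x0 y0 where xy0: "x0 \<in> Q" "y0 \<in> Q" "y0 \<notin> part x0" using two by blast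
  have pr0: "card (part x0) + card (part y0) \<le> n" using L_pair2[OF P Dle M xy0] .
  obtain a where a: "a \<in> Q" "2 * card (part a) \<le> n"
  proof (cases "card (part x0) \<le> card (part y0)")
    case True then show ?thesis using that[of x0] xy0 pr0 by simp
  next
    case False then show ?thesis using that[of y0] xy0 pr0 by simp
  qed
  have sa: "card (cn Q part i a) + card (cn Q part j a) + card (part a) = card Q" using L_sum[OF P a(1)] .
  have Da: "card (cn Q part i a) \<le> n" "card (cn Q part j a) \<le> n" using Dle a(1) by auto
  show False
  proof (cases "n = 2*p")
    case True
    then show False using base sa Da a(2) by linarith
  next
    case False
    then have n: "n = 2*p+1" "5*p+2 \<le> card Q" using base by auto
    have wa: "card (part a) = p" and Dia: "card (cn Q part i a) = 2*p+1" and Dja: "card (cn Q part j a) = 2*p+1"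
      using n sa Da a(2) by linarith+
    have wall: "\<forall>u\<in>Q. p \<le> card (part u)"
    proof
      fix u assume u: "u \<in> Q"
      have "card (cn Q part i u) + card (cn Q part j u) + card (part u) = card Q" using L_sum[OF P u] .
      moreover have "card (cn Q part i u) \<le> n" "card (cn Q part j u) \<le> n" using Dle u by auto
      ultimately show "p \<le> card (part u)" using n by linarith
    qed
    have wout: "\<And>u. u \<in> Q \<Longrightarrow> u \<notin> part a \<Longrightarrow> card (part u) \<le> p+1"
      using L_pair2[OF P Dle M a(1)] wa n by fastforce
    have bnd: "\<forall>y\<in>cn Q part k a. p \<le> card (part y) \<and> card (part y) \<le> p+1" for k
      using wall wout unfolding cn_def by blast
    obtain y1 where y1: "y1 \<in> cn Q part i a" "card (part y1) = p+1"
      using L_C[OF P a(1) Dia bnd] p by auto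
    obtain z1 where z1: "z1 \<in> cn Q part j a" "card (part z1) = p+1"
      using L_C[OF P' a(1) Dja bnd] p by auto
    have y1Q: "y1 \<in> Q" and z1Q: "z1 \<in> Q" using y1 z1 cn_def by auto
    have "z1 \<notin> part y1"
    proof
      assume "z1 \<in> part y1"
      then have "z1 \<in> cn Q part i a" using L_mod[OF P a(1) y1(1)] by blast
      then show False using z1(1) ij cn_def by auto
    qed
    then have "card (part y1) + card (part z1) \<le> n" using L_pair2[OF P Dle M y1Q z1Q] by blast
    then show False using y1 z1 n by linarith
  qed
qed

lemma prime_case: assumes P: "PS Q part i j" and two: "\<exists>x\<in>Q. \<exists>y\<in>Q. y \<notin> part x"
  and small: "\<forall>x\<in>Q. card (part x) \<le> n+m"
  and base: "(n = 2*p \<and> 5*p+1 \<le> card Q) \<or> (n = 2*p+1 \<and> 5*p+2 \<le> card Q)"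
  shows False
proof -
  have p: "3*m+3 \<le> p" using base nbig by (elim disjE) linarith+
  have M1: "2*n+2*m+3 \<le> card Q" and M2: "4*m+1 \<le> card Q" using base p by (elim disjE; linarith)+
  show False
  proof (cases "\<exists>x\<in>Q. card (part x) \<le> m")
    case True
    then obtain x where x: "x \<in> Q" "card (part x) \<le> m" by blast
    show False
    proof (cases "card (cn Q part j x) \<le> card (cn Q part i x)")
      case True
      then show False using L_3[OF P small M1 M2 x] by blast
    next
      case False
      then show False using L_3[OF PS_swap[OF P] small M1 M2 x] by simp
    qed
  next
    case False
    then have "\<forall>x\<in>Q. m+1 \<le> card (part x)" by auto
    then show False using L_4[OF P two _ base] by blast
  qed
qed

end

context mainloc
begin

definition modl :: "nat set \<Rightarrow> bool" where
  "modl Q \<longleftrightarrow> Q \<subseteq> {..<N} \<and> (\<forall>z\<in>{..<N} - Q. \<forall>x\<in>Q. \<forall>y\<in>Q. c z x = c z y)"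

lemma F1:
  assumes mQ: "modl Q" and cQ: "n+m+1 \<le> card Q" and q0: "q0 \<in> Q" and q: "q \<in> Q"
    and ob: "ob \<in> {..<N} - Q" and oi: "c ob q0 = i"
  shows "d i Q q + card {z\<in>{..<N} - Q. c z q0 = i} \<le> m"
proof (rule ccontr)
  assume H: "\<not> ?thesis"
  let ?O = "{z\<in>{..<N} - Q. c z q0 = i}"
  have QN: "Q \<subseteq> {..<N}" using mQ modl_def by blast
  have md: "\<And>z x y. z \<in> {..<N} - Q \<Longrightarrow> x \<in> Q \<Longrightarrow> y \<in> Q \<Longrightarrow> c z x = c z y"
    using mQ unfolding modl_def by blast
  have oN: "ob < N" "ob \<notin> Q" using ob by auto
  have qN: "q < N" using QN q by auto
  have oq: "ob \<noteq> q" using oN q by blast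
  have coq: "c ob q = i" using md[OF ob q q0] oi by simp
  let ?Su = "Q - {q}" and ?Sv = "(?O - {ob}) \<union> nb i Q q"
  have Su: "?Su \<subseteq> {x. x < N \<and> x \<noteq> ob \<and> x \<noteq> q \<and> c ob x = i}"
    using QN oN md[OF ob _ q0] oi by auto
  have Sv: "?Sv \<subseteq> {x. x < N \<and> x \<noteq> ob \<and> x \<noteq> q \<and> c q x = i}"
  proof
    fix x assume x: "x \<in> ?Sv"
    show "x \<in> {x. x < N \<and> x \<noteq> ob \<and> x \<noteq> q \<and> c q x = i}"
    proof (cases "x \<in> nb i Q q")
      case True then show ?thesis using QN oN unfolding nb_def by auto
    next
      case False
      then have x': "x \<in> {..<N} - Q" "c x q0 = i" "x \<noteq> ob" using x by auto
      have "c x q = i" using md[OF x'(1) q q0] x'(2) by simp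
      then have "c q x = i" using csym qN x' by auto
      then show ?thesis using x' q by auto
    qed
  qed
  have fQ: "finite Q" using QN by (meson finite_lessThan finite_subset)
  have fO: "finite ?O" by auto
  have c1: "card ?Su = card Q - 1" using q fQ by simp
  have c2: "card ?Sv = card (?O - {ob}) + d i Q q"
    by (rule card_Un_disjoint) (use nb_fin[OF QN] in \<open>auto simp: nb_def\<close>)
  have c3: "card (?O - {ob}) = card ?O - 1" using ob oi by simp
  have "ob \<in> ?O" using ob oi by simp
  then have "card ?O \<ge> 1" using fO by (metis One_nat_def Suc_leI card_gt_0_iff empty_iff)
  then have cv: "m \<le> card ?Sv" using H c2 c3 by linarith
  have cu: "n \<le> card ?Su" using c1 cQ by linarith
  have cuv: "n + m \<le> card (?Su \<union> ?Sv)"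
  proof -
    have "card ?Su \<le> card (?Su \<union> ?Sv)" using fQ fO nb_fin[OF QN] by (intro card_mono) auto
    then show ?thesis using c1 cQ by linarith
  qed
  show False by (rule ds[OF oN(1) qN oq coq Su Sv cu cv cuv])
qed

lemma main_upper:
  assumes col: "\<And>x y. x < N \<Longrightarrow> y < N \<Longrightarrow> x \<noteq> y \<Longrightarrow> c x y < K + 3"
  and NN: "(n = 2*p \<and> 5*p+1 + m*K \<le> N) \<or> (n = 2*p+1 \<and> 5*p+2 + m*K \<le> N)"
  shows False
proof -
  have p: "3*m+3 \<le> p" using NN nbig by (elim disjE) linarith+
  have NL: "n+m+1 \<le> N" using NN p by (elim disjE) linarith+
  have mV: "modl {..<N}" unfolding modl_def by auto
  obtain Q where Q: "modl Q" "n+m+1 \<le> card Q"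
    and Qmin: "\<And>Q'. modl Q' \<and> n+m+1 \<le> card Q' \<Longrightarrow> card Q \<le> card Q'"
    using ex_has_least_nat[where P = "\<lambda>Q. modl Q \<and> n+m+1 \<le> card Q" and m = card, of "{..<N}"] mV NL
    by auto
  have QN: "Q \<subseteq> {..<N}" using Q modl_def by blast
  have fQ: "finite Q" using QN by (meson finite_lessThan finite_subset)
  have md: "\<And>z x y. z \<in> {..<N} - Q \<Longrightarrow> x \<in> Q \<Longrightarrow> y \<in> Q \<Longrightarrow> c z x = c z y"
    using Q(1) unfolding modl_def by blast
  have "Q \<noteq> {}" using Q(2) by auto
  then obtain q0 where q0: "q0 \<in> Q" by blast
  define Ot where "Ot = {..<N} - Q"
  define out where "out = (\<lambda>z. c z q0) ` Ot"
  define Oi where "Oi i = {z \<in> Ot. c z q0 = i}" for i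
  have Fi: "\<And>i q. i \<in> out \<Longrightarrow> q \<in> Q \<Longrightarrow> d i Q q + card (Oi i) \<le> m"
  proof -
    fix i q assume i: "i \<in> out" and q: "q \<in> Q"
    obtain z where z: "z \<in> Ot" "c z q0 = i" using i out_def by blast
    show "d i Q q + card (Oi i) \<le> m" using F1[OF Q(1) Q(2) q0 q _ z(2)] z(1) Ot_def Oi_def by simp
  qed
  have finO: "finite Ot" using Ot_def by simp
  have finout: "finite out" using finO out_def by simp
  have cO: "card Ot = (\<Sum>i\<in>out. card (Oi i))"
  proof -
    have "Ot = (\<Union>i\<in>out. Oi i)" using Ot_def out_def Oi_def by auto
    moreover have "card (\<Union>i\<in>out. Oi i) = (\<Sum>i\<in>out. card (Oi i))"
      by (rule card_UN_disjoint) (use finout finO Oi_def in auto)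
    ultimately show ?thesis by simp
  qed
  have cO2: "card Ot \<le> m * card out"
  proof -
    have "(\<Sum>i\<in>out. card (Oi i)) \<le> (\<Sum>i\<in>out. m)"
      by (rule sum_mono) (use Fi q0 in fastforce)
    then show ?thesis using cO by (simp add: mult.commute)
  qed
  have NQ: "N = card Q + card Ot"
  proof -
    have "card Ot = card {..<N} - card Q" using Ot_def card_Diff_subset[OF fQ QN] by simp
    moreover have "card Q \<le> card {..<N}" using card_mono[OF _ QN] by simp
    ultimately show ?thesis by simp
  qed
  define st where "st = used Q - out"
  have outk: "out \<subseteq> {..<K+3}"
  proof
    fix i assume "i \<in> out"
    then obtain z where z: "z \<in> Ot" "i = c z q0" using out_def by blast
    have "z \<noteq> q0" using z q0 Ot_def by auto
    then show "i \<in> {..<K+3}" using col z q0 Ot_def QN by auto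
  qed
  have usedk: "used Q \<subseteq> {..<K+3}" using col QN unfolding used_def by auto
  have kk: "card out + card st \<le> K + 3"
  proof -
    have "out \<union> st \<subseteq> {..<K+3}" using outk usedk st_def by auto
    then have "card (out \<union> st) \<le> K + 3" using card_mono[of "{..<K+3}"] by fastforce
    moreover have "card (out \<union> st) = card out + card st"
      by (rule card_Un_disjoint) (use finout used_finite[OF fQ] st_def in auto)
    ultimately show ?thesis by simp
  qed
  show False
  proof (cases "3 \<le> card st")
    case True
    have "card out \<le> K" using kk True by linarith
    then have "m * card out \<le> m * K" by (rule mult_le_mono2)
    then have base': "(n = 2*p \<and> 5*p+1 \<le> card Q) \<or> (n = 2*p+1 \<and> 5*p+2 \<le> card Q)"
      using NN NQ cO2 by linarith
    have c2: "2 \<le> card Q" using Q(2) m1 by linarith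
    obtain part r b where G: "GP Q part r b" using gallai_partition[OF fQ QN c2] by blast
    have P: "PS Q part r b" using G QN unfolding GP_def PS_def by blast
    have two: "\<exists>x\<in>Q. \<exists>y\<in>Q. y \<notin> part x" using G unfolding GP_def by blast
    have PF: "PF Q part" using G unfolding GP_def by blast
    have gmod0: "\<forall>x\<in>Q. \<forall>z\<in>Q. \<forall>x'\<in>part x. z \<notin> part x \<longrightarrow> c z x' = c z x"
      using G[unfolded GP_def] by (elim conjE) assumption
    have gmod: "\<And>x z x'. x \<in> Q \<Longrightarrow> z \<in> Q \<Longrightarrow> x' \<in> part x \<Longrightarrow> z \<notin> part x \<Longrightarrow> c z x' = c z x"
      using gmod0 by blast
    have small: "\<forall>x\<in>Q. card (part x) \<le> n+m"
    proof
      fix x assume x: "x \<in> Q"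
      have px: "part x \<subseteq> Q" "x \<in> part x" using PF x unfolding PF_def by blast+
      have mp: "modl (part x)"
        unfolding modl_def
      proof (intro conjI ballI)
        show "part x \<subseteq> {..<N}" using px QN by blast
        fix z x1 x2 assume z: "z \<in> {..<N} - part x" and x1: "x1 \<in> part x" and x2: "x2 \<in> part x"
        show "c z x1 = c z x2"
        proof (cases "z \<in> Q")
          case True
          then show ?thesis using gmod[OF x True x1] gmod[OF x True x2] z by simp
        next
          case False
          then show ?thesis using md[of z x1 x2] z x1 x2 px by auto
        qed
      qed
      have ne: "part x \<noteq> Q"
      proof
        assume e: "part x = Q"
        obtain x0 y0 where xy: "x0 \<in> Q" "y0 \<in> Q" "y0 \<notin> part x0" using two by blast
        have "part x0 = part x" using PF x xy(1) e unfolding PF_def by metis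
        then show False using xy e by simp
      qed
      have "card (part x) < card Q" using psubset_card_mono[OF fQ] px ne by blast
      then show "card (part x) \<le> n+m" using Qmin[of "part x"] mp by fastforce
    qed
    show False using prime_case[OF P two small base'] .
  next
    case False
    have ineq: "N \<le> 1 + card {y\<in>Q. y \<noteq> q \<and> c q y \<in> st} + m * card out" if q: "q \<in> Q" for q
    proof -
      let ?S1 = "{y\<in>Q. y \<noteq> q \<and> c q y \<in> st}"
      have cover: "Q \<subseteq> {q} \<union> ?S1 \<union> (\<Union>i\<in>out. nb i Q q)"
      proof
        fix y assume y: "y \<in> Q"
        show "y \<in> {q} \<union> ?S1 \<union> (\<Union>i\<in>out. nb i Q q)"
        proof (cases "y = q")
          case True then show ?thesis by blast
        next
          case False
          then have u: "c q y \<in> used Q" using q y unfolding used_def by blast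
          show ?thesis
          proof (cases "c q y \<in> out")
            case True
            then have "y \<in> nb (c q y) Q q" using y False unfolding nb_def by auto
            then show ?thesis using True by blast
          next
            case F2: False
            then show ?thesis using u y False st_def by blast
          qed
        qed
      qed
      have fU: "finite ({q} \<union> ?S1 \<union> (\<Union>i\<in>out. nb i Q q))" using fQ finout nb_fin[OF QN] by auto
      have "card Q \<le> card ({q} \<union> ?S1 \<union> (\<Union>i\<in>out. nb i Q q))" using card_mono[OF fU cover] .
      also have "\<dots> \<le> card ({q} \<union> ?S1) + card (\<Union>i\<in>out. nb i Q q)" by (rule card_Un_le)
      also have "\<dots> \<le> 1 + card ?S1 + (\<Sum>i\<in>out. d i Q q)"
      proof -
        have "card ({q} \<union> ?S1) \<le> card {q} + card ?S1" by (rule card_Un_le)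
        moreover have "card (\<Union>i\<in>out. nb i Q q) \<le> (\<Sum>i\<in>out. d i Q q)" using card_UN_le[OF finout] .
        ultimately show ?thesis by simp
      qed
      finally have h1: "card Q \<le> 1 + card ?S1 + (\<Sum>i\<in>out. d i Q q)" .
      have "(\<Sum>i\<in>out. d i Q q) + card Ot = (\<Sum>i\<in>out. d i Q q + card (Oi i))"
        using cO by (simp add: sum.distrib)
      also have "\<dots> \<le> (\<Sum>i\<in>out. m)" by (rule sum_mono) (use Fi q in blast)
      finally have h2: "(\<Sum>i\<in>out. d i Q q) + card Ot \<le> m * card out" by (simp add: mult.commute)
      show ?thesis using h1 h2 NQ by linarith
    qed
    show False
    proof (cases "card st = 2")
      case True
      then obtain r b where rb: "st = {r,b}" "r \<noteq> b" by (meson card_2_iff)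
      have "card out \<le> K + 1" using kk True by linarith
      then have "m * card out \<le> m * (K+1)" by (rule mult_le_mono2)
      then have mo: "m * card out \<le> m * K + m" by simp
      have sm: "\<forall>x\<in>Q. 2*n+2*m+1 \<le> d r Q x + d b Q x"
      proof
        fix x assume x: "x \<in> Q"
        have "{y\<in>Q. y \<noteq> x \<and> c x y \<in> st} \<subseteq> nb r Q x \<union> nb b Q x" using rb unfolding nb_def by auto
        then have "card {y\<in>Q. y \<noteq> x \<and> c x y \<in> st} \<le> card (nb r Q x \<union> nb b Q x)"
          using nb_fin[OF QN] by (simp add: card_mono)
        also have "\<dots> \<le> d r Q x + d b Q x" by (rule card_Un_le)
        finally show "2*n+2*m+1 \<le> d r Q x + d b Q x" using ineq[OF x] mo NN p by linarith
      qed
      have rich: "\<forall>x\<in>Q. n+m+1 \<le> d r Q x \<or> n+m+1 \<le> d b Q x" using sm by fastforce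
      have D1: "n + 2*m + 1 \<le> 2*n+2*m+1" by simp
      show False using MDL[OF QN \<open>Q \<noteq> {}\<close> rb(2) rich sm D1] .
    next
      case F3: False
      have st1: "card st \<le> 1" using False F3 by linarith
      show False
      proof (cases "st = {}")
        case True
        have "m * card out \<le> m * (K+3)" using kk by (intro mult_le_mono2) simp
        moreover have "m * (K+3) = m * K + 3*m" by (simp add: algebra_simps)
        ultimately have "m * card out \<le> m * K + 3*m" by linarith
        then show False using ineq[OF q0] True NN p by auto
      next
        case F4: False
        then obtain r where r: "r \<in> st" by blast
        have str: "st = {r}" using st1 r card_le_Suc0_iff_eq[of st] used_finite[OF fQ] st_def by auto
        have rk: "r < K+3" using r usedk st_def by auto
        have "card out \<le> K + 2" using kk str by simp
        then have "m * card out \<le> m * (K+2)" by (rule mult_le_mono2)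
        then have mo: "m * card out \<le> m * K + 2*m" by simp
        have nbk: "nb (K+3) Q x = {}" if x: "x \<in> Q" for x
        proof -
          have "\<And>y. y \<in> Q \<Longrightarrow> y \<noteq> x \<Longrightarrow> c x y < K+3" using col QN x by auto
          then show ?thesis unfolding nb_def by fastforce
        qed
        have sm: "\<forall>x\<in>Q. n+2*m+1 \<le> d r Q x + d (K+3) Q x"
        proof
          fix x assume x: "x \<in> Q"
          have "{y\<in>Q. y \<noteq> x \<and> c x y \<in> st} \<subseteq> nb r Q x" using str unfolding nb_def by auto
          then have "card {y\<in>Q. y \<noteq> x \<and> c x y \<in> st} \<le> d r Q x"
            using nb_fin[OF QN] by (simp add: card_mono)
          then show "n+2*m+1 \<le> d r Q x + d (K+3) Q x" using ineq[OF x] mo NN p nbk[OF x] by auto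
        qed
        have rich: "\<forall>x\<in>Q. n+m+1 \<le> d r Q x \<or> n+m+1 \<le> d (K+3) Q x" using sm nbk by fastforce
        have rb: "r \<noteq> K+3" using rk by simp
        show False using MDL[OF QN \<open>Q \<noteq> {}\<close> rb rich sm] by simp
      qed
    qed
  qed
qed

end

lemma mds_mono: assumes h: "mono_double_star N c n m" and NN: "N \<le> N'" shows "mono_double_star N' c n m"
proof -
  obtain u v A B where w: "u < N \<and> v < N \<and> u \<noteq> v \<and> A \<subseteq> {0..<N} - {u,v} \<and> B \<subseteq> {0..<N} - {u,v}
      \<and> A \<inter> B = {} \<and> card A = n \<and> card B = m \<and> (\<forall>a\<in>A. c u a = c u v) \<and> (\<forall>b\<in>B. c v b = c u v)"
    using h unfolding mono_double_star_def by blast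
  have sub: "{0..<N} - {u,v} \<subseteq> {0..<N'} - {u,v}" using NN by auto
  have w': "u < N' \<and> v < N' \<and> u \<noteq> v \<and> A \<subseteq> {0..<N'} - {u,v} \<and> B \<subseteq> {0..<N'} - {u,v}
      \<and> A \<inter> B = {} \<and> card A = n \<and> card B = m \<and> (\<forall>a\<in>A. c u a = c u v) \<and> (\<forall>b\<in>B. c v b = c u v)"
    using w sub NN by (meson order_trans order_less_le_trans)
  then show ?thesis unfolding mono_double_star_def by blast
qed

locale lb =
  fixes e :: bool and p m K :: nat
  assumes p2: "2 \<le> p" and m1: "1 \<le> m" and mp: "m \<le> p"
begin

definition C0 :: nat where "C0 = 5*p + (if e then 0 else 1)"
definition nn :: nat where "nn = 2*p + (if e then 0 else 1)"
definition NN :: nat where "NN = C0 + m*K"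
definition blk :: "nat \<Rightarrow> nat" where "blk x = (if e then x div p else (x - 1) div p)"
definition lev :: "nat \<Rightarrow> nat" where "lev x = (if x < C0 then K else (x - C0) div m)"
definition cc :: "nat \<Rightarrow> nat \<Rightarrow> nat" where
  "cc x y = (if blk x = blk y then 2
             else if (blk x + 5 - blk y) mod 5 = 1 \<or> (blk x + 5 - blk y) mod 5 = 4 then 0 else 1)"
definition col :: "nat \<Rightarrow> nat \<Rightarrow> nat" where
  "col x y = (if lev x = lev y then (if x < C0 then cc x y else 2) else 3 + min (lev x) (lev y))"

lemma divb: fixes y q t :: nat assumes "0 < q" "y div q = t" shows "t*q \<le> y" "y < t*q + q"
proof -
  have "y = t*q + y mod q" using assms(2) div_mult_mod_eq[of y q] by (simp add: mult.commute)
  moreover have "y mod q < q" using assms(1) by simp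
  ultimately show "t*q \<le> y" "y < t*q + q" by linarith+
qed

lemma blk5: "x < C0 \<Longrightarrow> blk x < 5"
proof -
  assume x: "x < C0"
  have pp: "0 < p" using p2 by simp
  show "blk x < 5"
  proof (cases e)
    case True
    then have "x < 5*p" using x C0_def by simp
    then show ?thesis using True blk_def pp by (simp add: div_less_iff_less_mult mult.commute)
  next
    case False
    then have "x - 1 < 5*p" using x C0_def p2 by simp
    then show ?thesis using False blk_def pp by (simp add: div_less_iff_less_mult mult.commute)
  qed
qed

lemma lev_core: "x < NN \<Longrightarrow> lev x = K \<longleftrightarrow> x < C0"
proof -
  assume x: "x < NN"
  show ?thesis
  proof (cases "x < C0")
    case True then show ?thesis using lev_def by simp
  next
    case False
    have "x - C0 < m*K" using x False NN_def by linarith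
    then have "(x - C0) div m < K" using m1 by (simp add: div_less_iff_less_mult mult.commute)
    then show ?thesis using False lev_def by simp
  qed
qed

lemma lev_le: "x < NN \<Longrightarrow> lev x \<le> K"
proof -
  assume x: "x < NN"
  show ?thesis
  proof (cases "x < C0")
    case True then show ?thesis using lev_def by simp
  next
    case False
    have "x - C0 < m*K" using x False NN_def by linarith
    then have "(x - C0) div m < K" using m1 by (simp add: div_less_iff_less_mult mult.commute)
    then show ?thesis using False lev_def by simp
  qed
qed

lemma five: "(a::nat) < 5 \<longleftrightarrow> a = 0 \<or> a = 1 \<or> a = 2 \<or> a = 3 \<or> a = 4"
  by auto

lemma cc_sym: "x < C0 \<Longrightarrow> y < C0 \<Longrightarrow> cc x y = cc y x"
proof -
  assume xy: "x < C0" "y < C0"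
  have a: "blk x < 5" "blk y < 5" using blk5 xy by auto
  have "\<And>a b::nat. a < 5 \<Longrightarrow> b < 5 \<Longrightarrow> a \<noteq> b \<Longrightarrow>
     ((a + 5 - b) mod 5 = 1 \<or> (a + 5 - b) mod 5 = 4) = ((b + 5 - a) mod 5 = 1 \<or> (b + 5 - a) mod 5 = 4)"
    unfolding five by auto
  then show ?thesis using a unfolding cc_def by auto
qed

lemma col_sym: "x < NN \<Longrightarrow> y < NN \<Longrightarrow> col x y = col y x"
proof -
  assume xy: "x < NN" "y < NN"
  show ?thesis
  proof (cases "lev x = lev y")
    case True
    then have "x < C0 \<longleftrightarrow> y < C0" using lev_core xy by metis
    then show ?thesis using True cc_sym unfolding col_def by auto
  next
    case False then show ?thesis unfolding col_def by (simp add: min.commute)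
  qed
qed

lemma col_lt: "x < NN \<Longrightarrow> y < NN \<Longrightarrow> col x y < K + 3"
proof -
  assume xy: "x < NN" "y < NN"
  show ?thesis
  proof (cases "lev x = lev y")
    case True then show ?thesis unfolding col_def cc_def by auto
  next
    case False
    have "lev x \<le> K" "lev y \<le> K" using lev_le xy by auto
    then have "min (lev x) (lev y) < K" using False by linarith
    then show ?thesis using False unfolding col_def by simp
  qed
qed

lemma gal_col: assumes xyz: "x < NN" "y < NN" "z < NN"
  shows "col x y = col y z \<or> col y z = col x z \<or> col x y = col x z"
proof (cases "lev x = lev y \<and> lev y = lev z")
  case True
  show ?thesis
  proof (cases "x < C0")
    case xc: True
    have yc: "y < C0" "z < C0" using True xc lev_core xyz by metis+
    have cxy: "col x y = cc x y" "col y z = cc y z" "col x z = cc x z" using True xc yc unfolding col_def by auto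
    have ccb: "\<And>a b. cc a b \<le> 2" unfolding cc_def by auto
    show ?thesis
    proof (cases "blk x = blk y")
      case True then show ?thesis using cxy unfolding cc_def by auto
    next
      case F1: False
      show ?thesis
      proof (cases "blk y = blk z")
        case True then show ?thesis using cxy unfolding cc_def by auto
      next
        case F2: False
        show ?thesis
        proof (cases "blk x = blk z")
          case True
          then have "cc x y = cc z y" unfolding cc_def by auto
          also have "\<dots> = cc y z" using cc_sym yc by simp
          finally show ?thesis using cxy by simp
        next
          case F3: False
          have "cc x y \<le> 1" "cc y z \<le> 1" "cc x z \<le> 1" using F1 F2 F3 unfolding cc_def by auto
          then show ?thesis using cxy by linarith
        qed
      qed
    qed
  next
    case False
    then show ?thesis using True unfolding col_def by auto
  qed
next
  case False
  have cn: "\<And>a b. lev a \<noteq> lev b \<Longrightarrow> col a b = 3 + min (lev a) (lev b)" by (simp add: col_def)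
  show ?thesis
  proof (cases "lev x = lev y")
    case True
    then have "lev y \<noteq> lev z" "lev x \<noteq> lev z" using False by auto
    then show ?thesis using cn True by simp
  next
    case n1: False
    show ?thesis
    proof (cases "lev y = lev z")
      case True
      then have "lev x \<noteq> lev z" using n1 by auto
      then show ?thesis using cn True n1 by simp
    next
      case n2: False
      show ?thesis
      proof (cases "lev x = lev z")
        case True
        then show ?thesis using cn n1 n2 by (simp add: min.commute)
      next
        case n3: False
        have e1: "col x y = 3 + min (lev x) (lev y)" "col y z = 3 + min (lev y) (lev z)"
          "col x z = 3 + min (lev x) (lev z)" using cn n1 n2 n3 by auto
        show ?thesis
        proof (cases "lev x \<le> lev y \<and> lev x \<le> lev z")
          case True then show ?thesis using e1 by (simp add: min_def)
        next
          case F: False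
          show ?thesis
          proof (cases "lev y \<le> lev z")
            case True then show ?thesis using e1 F by (simp add: min_def)
          next
            case False then show ?thesis using e1 F by (simp add: min_def)
          qed
        qed
      qed
    qed
  qed
qed

definition S :: "nat \<Rightarrow> nat \<Rightarrow> nat set" where "S i x = {y. y < NN \<and> y \<noteq> x \<and> col x y = i}"
definition Lay :: "nat \<Rightarrow> nat set" where "Lay j = {y. y < NN \<and> \<not> y < C0 \<and> lev y = j}"
definition Bk :: "nat \<Rightarrow> nat set" where "Bk t = {y. y < C0 \<and> blk y = t}"

lemma S_fin: "finite (S i x)" unfolding S_def by simp

lemma Lay_fin: "finite (Lay j)" unfolding Lay_def by simp

lemma Lay_card: "card (Lay j) \<le> m"
proof -
  have "Lay j \<subseteq> {C0 + j*m ..< C0 + j*m + m}"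
  proof
    fix y assume "y \<in> Lay j"
    then have y: "\<not> y < C0" "(y - C0) div m = j" unfolding Lay_def lev_def by auto
    have "j*m \<le> y - C0" "y - C0 < j*m + m" using divb[OF _ y(2)] m1 by auto
    then show "y \<in> {C0 + j*m ..< C0 + j*m + m}" using y(1) by auto
  qed
  then show ?thesis by (metis card_atLeastLessThan card_mono diff_add_inverse finite_atLeastLessThan)
qed

lemma Bk_card: "card (Bk t) \<le> p + (if \<not> e \<and> t = 0 then 1 else 0)"
proof (cases e)
  case True
  have "Bk t \<subseteq> {t*p ..< t*p + p}"
  proof
    fix y assume "y \<in> Bk t"
    then have "y div p = t" using True unfolding Bk_def blk_def by auto
    then show "y \<in> {t*p ..< t*p + p}" using divb[of p y t] p2 by auto
  qed
  then have "card (Bk t) \<le> p" by (metis card_atLeastLessThan card_mono diff_add_inverse finite_atLeastLessThan)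
  then show ?thesis by simp
next
  case False
  show ?thesis
  proof (cases "t = 0")
    case True
    have "Bk t \<subseteq> {0 ..< p + 1}"
    proof
      fix y assume "y \<in> Bk t"
      then have "(y - 1) div p = 0" using False True unfolding Bk_def blk_def by auto
      then have "y - 1 < p" using divb[of p "y - 1" 0] p2 by auto
      then show "y \<in> {0 ..< p + 1}" by auto
    qed
    then have "card (Bk t) \<le> p + 1" by (metis card_atLeastLessThan card_mono diff_zero finite_atLeastLessThan)
    then show ?thesis using False True by simp
  next
    case t: False
    have "Bk t \<subseteq> {t*p + 1 ..< t*p + p + 1}"
    proof
      fix y assume "y \<in> Bk t"
      then have d: "(y - 1) div p = t" using False unfolding Bk_def blk_def by auto
      have "t*p \<le> y - 1" "y - 1 < t*p + p" using divb[OF _ d] p2 by auto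
      moreover have "1 \<le> t*p" using t p2 by simp
      ultimately have "t*p + 1 \<le> y" "y < t*p + p + 1" by linarith+
      then show "y \<in> {t*p + 1 ..< t*p + p + 1}" by simp
    qed
    then have "card (Bk t) \<le> p" by (metis card_atLeastLessThan card_mono add_diff_cancel_left' finite_atLeastLessThan add.commute add.left_commute)
    then show ?thesis by simp
  qed
qed

lemma same_lev_col: "x < NN \<Longrightarrow> y < NN \<Longrightarrow> lev x = lev y \<Longrightarrow> col x y \<le> 2"
  unfolding col_def cc_def by auto

lemma DEG_other: assumes x: "x < NN" and j: "j \<noteq> lev x" shows "S (3+j) x \<subseteq> Lay j"
proof
  fix y assume "y \<in> S (3+j) x"
  then have y: "y < NN" "y \<noteq> x" "col x y = 3 + j" unfolding S_def by auto
  have ne: "lev x \<noteq> lev y" using same_lev_col[OF x y(1)] y(3) by fastforce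
  then have "min (lev x) (lev y) = j" using y(3) unfolding col_def by simp
  then have ly: "lev y = j" using j by (simp add: min_def split: if_splits)
  have "\<not> y < C0"
  proof
    assume "y < C0"
    then have "lev y = K" using lev_def by simp
    then have "lev x < K" using lev_le[OF x] ne by simp
    then show False using \<open>min (lev x) (lev y) = j\<close> ly j \<open>lev y = K\<close> by simp
  qed
  then show "y \<in> Lay j" using y ly unfolding Lay_def by simp
qed

lemma five_cases0: "(a::nat) < 5 \<Longrightarrow> b < 5 \<Longrightarrow> a \<noteq> b \<Longrightarrow> ((a + 5 - b) mod 5 = 1 \<or> (a + 5 - b) mod 5 = 4) \<Longrightarrow>
   b = (a+1) mod 5 \<or> b = (a+4) mod 5"
  unfolding five by auto

lemma five_cases1: "(a::nat) < 5 \<Longrightarrow> b < 5 \<Longrightarrow> a \<noteq> b \<Longrightarrow> \<not>((a + 5 - b) mod 5 = 1 \<or> (a + 5 - b) mod 5 = 4) \<Longrightarrow>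
   b = (a+2) mod 5 \<or> b = (a+3) mod 5"
  unfolding five by auto

lemma five_ne: "(a::nat) < 5 \<Longrightarrow> (a+1) mod 5 \<noteq> (a+4) mod 5 \<and> (a+2) mod 5 \<noteq> (a+3) mod 5"
  unfolding five by auto

lemma two_blocks: assumes "t1 \<noteq> t2" shows "card (Bk t1 \<union> Bk t2) \<le> nn"
proof -
  have "card (Bk t1 \<union> Bk t2) \<le> card (Bk t1) + card (Bk t2)" by (rule card_Un_le)
  then show ?thesis using Bk_card[of t1] Bk_card[of t2] assms nn_def by (auto split: if_splits)
qed

lemma DEG_hi: assumes x: "x < NN" and i: "i \<noteq> 3 + lev x \<or> lev x = K" and i3: "3 \<le> i"
  shows "card (S i x) \<le> nn"
proof -
  obtain j where ij: "i = 3 + j" using i3 by (metis le_add_diff_inverse)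
  show ?thesis
  proof (cases "j = lev x")
    case False
    have "card (S i x) \<le> card (Lay j)" using card_mono[OF Lay_fin DEG_other[OF x False]] ij by simp
    then show ?thesis using Lay_card[of j] mp nn_def by simp
  next
    case jt: True
    then have lk: "lev x = K" using i ij by simp
    have "S i x = {}"
    proof (rule ccontr)
      assume "S i x \<noteq> {}"
      then obtain y where y: "y < NN" "col x y = 3 + j" unfolding S_def using ij by auto
      have ne: "lev x \<noteq> lev y"
      proof
        assume "lev x = lev y"
        then have "col x y \<le> 2" using same_lev_col[OF x y(1)] by simp
        then show False using y(2) by simp
      qed
      then have "col x y = 3 + min (lev x) (lev y)" unfolding col_def by simp
      then have "min (lev x) (lev y) = K" using y(2) jt lk by simp
      moreover have "lev y \<le> K" using lev_le[OF y(1)] .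
      ultimately show False using ne lk by (simp add: min_def split: if_splits)
    qed
    then show ?thesis by simp
  qed
qed

lemma core_nb: assumes x: "x < NN" "x < C0" and y: "y \<in> S i x" and i3: "i < 3"
  shows "y < C0 \<and> cc x y = i"
proof -
  have y': "y < NN" "col x y = i" using y unfolding S_def by auto
  have "lev x = lev y"
  proof (rule ccontr)
    assume "lev x \<noteq> lev y"
    then have "col x y = 3 + min (lev x) (lev y)" unfolding col_def by simp
    then show False using y'(2) i3 by simp
  qed
  then have "y < C0" using lev_core x y'(1) by metis
  then show ?thesis using \<open>lev x = lev y\<close> x y'(2) unfolding col_def by simp
qed

lemma DEG_c2: assumes x: "x < NN" "x < C0" shows "card (S 2 x) \<le> nn"
proof -
  have "S 2 x \<subseteq> Bk (blk x)"
  proof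
    fix y assume y: "y \<in> S 2 x"
    have yc: "y < C0" "cc x y = 2" using core_nb[OF x y] by auto
    then have "blk y = blk x" unfolding cc_def by (simp split: if_splits)
    then show "y \<in> Bk (blk x)" using yc unfolding Bk_def by simp
  qed
  then have "card (S 2 x) \<le> card (Bk (blk x))" by (rule card_mono[rotated]) (simp add: Bk_def)
  then show ?thesis using Bk_card[of "blk x"] nn_def p2 by (simp split: if_splits)
qed

lemma DEG_c01: assumes x: "x < NN" "x < C0" and i01: "i = 0 \<or> i = 1" shows "card (S i x) \<le> nn"
proof -
  have a5: "blk x < 5" using blk5 x(2) .
  define t1 where "t1 = (if i = 0 then (blk x + 1) mod 5 else (blk x + 2) mod 5)"
  define t2 where "t2 = (if i = 0 then (blk x + 4) mod 5 else (blk x + 3) mod 5)"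
  have "S i x \<subseteq> Bk t1 \<union> Bk t2"
  proof
    fix y assume y: "y \<in> S i x"
    have yc: "y < C0" "cc x y = i" using core_nb[OF x y] i01 by auto
    have nb: "blk x \<noteq> blk y"
    proof
      assume "blk x = blk y" then have "cc x y = 2" unfolding cc_def by simp
      then show False using yc i01 by auto
    qed
    have b5: "blk y < 5" using blk5 yc by simp
    show "y \<in> Bk t1 \<union> Bk t2"
    proof (cases "i = 0")
      case True
      then have "(blk x + 5 - blk y) mod 5 = 1 \<or> (blk x + 5 - blk y) mod 5 = 4"
        using yc nb unfolding cc_def by (simp split: if_splits)
      then have h: "blk y = (blk x + 1) mod 5 \<or> blk y = (blk x + 4) mod 5" by (rule five_cases0[OF a5 b5 nb])
      have "t1 = (blk x + 1) mod 5" "t2 = (blk x + 4) mod 5" using True t1_def t2_def by simp_all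
      then have "blk y = t1 \<or> blk y = t2" using h by metis
      then show ?thesis using yc Bk_def by auto
    next
      case F: False
      have i1: "i = 1" using F i01 by simp
      define dd where "dd = (blk x + 5 - blk y) mod 5"
      have "cc x y = (if dd = 1 \<or> dd = 4 then 0 else 1)" using nb unfolding cc_def dd_def by (simp only: if_False)
      then have "\<not>(dd = 1 \<or> dd = 4)" using yc(2) i1 by (cases "dd = 1 \<or> dd = 4") simp_all
      then have "\<not>((blk x + 5 - blk y) mod 5 = 1 \<or> (blk x + 5 - blk y) mod 5 = 4)" unfolding dd_def .
      then have h: "blk y = (blk x + 2) mod 5 \<or> blk y = (blk x + 3) mod 5" by (rule five_cases1[OF a5 b5 nb])
      have "t1 = (blk x + 2) mod 5" "t2 = (blk x + 3) mod 5" using F t1_def t2_def by simp_all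
      then have "blk y = t1 \<or> blk y = t2" using h by metis
      then show ?thesis using yc Bk_def by auto
    qed
  qed
  then have "card (S i x) \<le> card (Bk t1 \<union> Bk t2)" by (rule card_mono[rotated]) (simp add: Bk_def)
  moreover have ne: "t1 \<noteq> t2" using five_ne[OF a5] t1_def t2_def by auto
  ultimately show ?thesis using two_blocks[OF ne] by simp
qed

lemma DEG_lay: assumes x: "x < NN" "\<not> x < C0" and i3: "i < 3" shows "card (S i x) \<le> nn"
proof -
  have "S i x \<subseteq> Lay (lev x)"
  proof
    fix y assume "y \<in> S i x"
    then have y: "y < NN" "col x y = i" unfolding S_def by auto
    have "lev x = lev y"
    proof (rule ccontr)
      assume "lev x \<noteq> lev y"
      then have "col x y = 3 + min (lev x) (lev y)" unfolding col_def by simp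
      then show False using y(2) i3 by simp
    qed
    moreover have "\<not> y < C0" using lev_core x y(1) calculation by metis
    ultimately show "y \<in> Lay (lev x)" using y unfolding Lay_def by simp
  qed
  then have "card (S i x) \<le> card (Lay (lev x))" using card_mono[OF Lay_fin] by blast
  then show ?thesis using Lay_card[of "lev x"] mp nn_def by simp
qed

lemma DEG: assumes x: "x < NN" and i: "i \<noteq> 3 + lev x \<or> lev x = K" shows "card (S i x) \<le> nn"
proof (cases "3 \<le> i")
  case True then show ?thesis using DEG_hi[OF x i] by blast
next
  case False
  show ?thesis
  proof (cases "x < C0")
    case True
    have "i = 0 \<or> i = 1 \<or> i = 2" using False by arith
    then show ?thesis using DEG_c2[OF x True] DEG_c01[OF x True] by auto
  next
    case F: False then show ?thesis using DEG_lay[OF x F] False by simp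
  qed
qed

lemma no_ds: "\<not> mono_double_star NN col nn m"
proof
  assume "mono_double_star NN col nn m"
  then obtain u v A B where uv: "u < NN" "v < NN" "u \<noteq> v"
    and A: "A \<subseteq> {0..<NN} - {u, v}" and B: "B \<subseteq> {0..<NN} - {u, v}" and cA: "card A = nn" and cB: "card B = m"
    and colA: "\<forall>a\<in>A. col u a = col u v" and colB: "\<forall>b\<in>B. col v b = col u v"
    unfolding mono_double_star_def by blast
  define i where "i = col u v"
  have fA: "finite A" using A by (meson finite_Diff finite_atLeastLessThan finite_subset)
  have fB: "finite B" using B by (meson finite_Diff finite_atLeastLessThan finite_subset)
  have s1: "insert v A \<subseteq> S i u" using A colA uv i_def unfolding S_def by auto
  have vA: "v \<notin> A" using A by blast
  have c1: "card (insert v A) = nn + 1" using fA vA cA by simp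
  have "nn + 1 \<le> card (S i u)" using card_mono[OF S_fin s1] c1 by simp
  then have li: "i = 3 + lev u" "lev u \<noteq> K" using DEG[OF uv(1), of i] by auto
  have "lev u \<noteq> lev v"
  proof
    assume "lev u = lev v"
    then have "col u v \<le> 2" using same_lev_col uv by simp
    then show False using li i_def by simp
  qed
  then have "S i v \<subseteq> Lay (lev u)" using DEG_other[OF uv(2)] li by simp
  then have "card (S i v) \<le> m" using card_mono[OF Lay_fin, of "S i v" "lev u"] Lay_card[of "lev u"] by linarith
  moreover have s2: "insert u B \<subseteq> S i v"
  proof -
    have "col v u = i" using col_sym[OF uv(2) uv(1)] i_def by simp
    moreover have "\<forall>b\<in>B. b < NN \<and> b \<noteq> v \<and> col v b = i" using B colB i_def by auto
    ultimately show ?thesis using uv unfolding S_def by blast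
  qed
  moreover have "u \<notin> B" using B by blast
  then have "card (insert u B) = m + 1" using fB cB by simp
  ultimately show False using card_mono[OF S_fin s2] by simp
qed

lemma lower: assumes "N \<le> NN"
  shows "k_coloring (K+3) N col \<and> \<not> rainbow_K3 N col \<and> \<not> mono_double_star N col nn m"
proof (intro conjI)
  show "k_coloring (K+3) N col" unfolding k_coloring_def using col_sym col_lt assms by auto
  show "\<not> rainbow_K3 N col"
  proof
    assume "rainbow_K3 N col"
    then obtain x y z where w: "x < N \<and> y < N \<and> z < N \<and> x \<noteq> y \<and> y \<noteq> z \<and> x \<noteq> z \<and>
        col x y \<noteq> col y z \<and> col y z \<noteq> col x z \<and> col x y \<noteq> col x z"
      unfolding rainbow_K3_def by blast
    have "x < NN" "y < NN" "z < NN" using w assms by auto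
    then show False using gal_col[of x y z] w by blast
  qed
  show "\<not> mono_double_star N col nn m"
  proof
    assume "mono_double_star N col nn m"
    then have "mono_double_star NN col nn m" using mds_mono assms by blast
    then show False using no_ds by blast
  qed
qed

end

theorem theorem5:
  fixes n m k :: nat
  assumes "m \<ge> 1" and "k \<ge> 3" and "n \<ge> 6 * m + 7"
  shows "gr_K3_double_star k n m =
           (if even n then 5 * (n div 2) + m * (k - 3) + 1
            else 5 * ((n - 1) div 2) + m * (k - 3) + 2)"
proof -
  define p where "p = n div 2"
  define K where "K = k - 3"
  define T where "T = (if even n then 5 * (n div 2) + m * (k - 3) + 1
            else 5 * ((n - 1) div 2) + m * (k - 3) + 2)"
  have kK: "k = K + 3" using assms(2) K_def by simp
  have np: "(n = 2*p \<and> even n) \<or> (n = 2*p+1 \<and> odd n)" using p_def by presburger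
  have p2: "2 \<le> p" and mp: "m \<le> p" using np assms by auto
  have od: "odd n \<Longrightarrow> (n - 1) div 2 = n div 2" by presburger
  have Tp: "T = 5*p + (if even n then 0 else 1) + m*K + 1"
  proof (cases "even n")
    case True then show ?thesis using T_def p_def K_def by simp
  next
    case False then show ?thesis using T_def p_def K_def od by simp
  qed
  define P where "P = (\<lambda>N. \<forall>c. k_coloring k N c \<longrightarrow> rainbow_K3 N c \<or> mono_double_star N c n m)"
  have up: "P T"
    unfolding P_def
  proof (intro allI impI)
    fix c assume kc: "k_coloring k T c"
    show "rainbow_K3 T c \<or> mono_double_star T c n m"
    proof (rule ccontr)
      assume H: "\<not> (rainbow_K3 T c \<or> mono_double_star T c n m)"
      have csym: "\<And>x y. x < T \<Longrightarrow> y < T \<Longrightarrow> c x y = c y x"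
        using kc unfolding k_coloring_def by (metis)
      have gal: "\<And>x y z. x < T \<Longrightarrow> y < T \<Longrightarrow> z < T \<Longrightarrow> x \<noteq> y \<Longrightarrow> y \<noteq> z \<Longrightarrow> x \<noteq> z \<Longrightarrow>
          c x y = c y z \<or> c y z = c x z \<or> c x y = c x z"
        using H unfolding rainbow_K3_def by blast
      interpret M: mainloc T c n m
        by (unfold_locales) (use csym gal H assms in auto)
      have col: "\<And>x y. x < T \<Longrightarrow> y < T \<Longrightarrow> x \<noteq> y \<Longrightarrow> c x y < K + 3"
        using kc kK unfolding k_coloring_def by auto
      have NN: "(n = 2*p \<and> 5*p+1 + m*K \<le> T) \<or> (n = 2*p+1 \<and> 5*p+2 + m*K \<le> T)"
        using np Tp by auto
      show False using M.main_upper[OF col NN] .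
    qed
  qed
  have low: "T \<le> N" if PN: "P N" for N
  proof (rule ccontr)
    assume "\<not> T \<le> N"
    then have NT: "N < T" by simp
    interpret L: lb "even n" p m K by unfold_locales (use p2 mp assms in auto)
    have "N \<le> L.NN" using NT Tp unfolding L.NN_def L.C0_def by simp
    then have h: "k_coloring (K+3) N L.col \<and> \<not> rainbow_K3 N L.col \<and> \<not> mono_double_star N L.col L.nn m"
      by (rule L.lower)
    have "L.nn = n" unfolding L.nn_def using np by auto
    then show False using h PN kK unfolding P_def by auto
  qed
  have "gr_K3_double_star k n m = T"
    unfolding gr_K3_double_star_def
    using up low unfolding P_def by (intro Least_equality) auto
  then show ?thesis using T_def by simp
qed

end
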